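(* Let $g(t)$, $t\in[0,T)$, be a solution of the Ricci flow $\partial_tg_{ij}=-2R_{ij}$ on an $n$-manifold $M$, and for $\epsilon,\delta>0$ let $\tilde g_{\epsilon,\delta}=g(t)+\big(R+\frac{\epsilon}{2(t+\delta)}\big)dt^2$ on $M\times[0,T)$. At points where $\tilde g_{\epsilon,\delta}$ is positive-definite, the Riemann curvature tensor of its Levi-Civita connection satisfies: 1) $\tilde R_{ijk}^l=R_{ijk}^l-(R_i^lR_{jk}-R_j^lR_{ik})(R+\epsilon(2t+2\delta)^{-1})^{-1}$ for $1\le i,j,k,l\le n$; 2) $\tilde R_{0jk}^l=-\nabla_kR_j^l+\nabla^lR_{jk}-\tfrac12(R_{jk}\nabla^lR-R_j^l\nabla_kR)(R+\epsilon(2t+2\delta)^{-1})^{-1}$ for $1\le j,k,l\le n$; 3) $\tilde R_{i00}^l=\partial_tR_i^l-\tfrac12\nabla_i\nabla^lR-R_i^mR_m^l-\Big[\Big(\frac{\partial_tR}{2}+\frac{-\epsilon}{4(t+\delta)^2}\Big)R_i^l-\frac{\nabla_iR\nabla^lR}{4}\Big](R+\epsilon(2t+2\delta)^{-1})^{-1}$ for $1\le i,l\le n$.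
   Context: Coordinates $x^1,\dots,x^n$ on $M$ and $x^0=t$. For a connection with Christoffel symbols $\Gamma_{ij}^k$, the curvature is $R_{ijk}^l=\partial_i\Gamma_{jk}^l-\partial_j\Gamma_{ik}^l+\Gamma_{jk}^m\Gamma_{im}^l-\Gamma_{ik}^m\Gamma_{jm}^l$ (for $\tilde g_{\epsilon,\delta}$, indices and sums range over $\{0,\dots,n\}$ with $\partial_0=\partial_t$). For $g(t)$: $R_{jk}=R_{pjk}^p$, $R=g^{jk}R_{jk}$, $R_i^l=g^{lm}R_{im}$, indices raised with $g(t)^{-1}$, $\nabla$ the Levi-Civita connection of $g(t)$, and $\partial_tR_i^l$ the time derivative of the components $R_i^l$. *)

theory Defs
  imports "HOL-Analysis.Analysis"
begin

text \<open>Spatial indices 1..n are the elements of a finite type 'n;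
  space-time indices 0..n are the elements of 'n option, with None playing the role of the
  index 0 (time) and Some i the role of the spatial index i.\<close>

type_synonym 'n fld = "real \<Rightarrow> real^'n \<Rightarrow> real"

definition pd :: "'n::finite option \<Rightarrow> 'n fld \<Rightarrow> 'n fld" where
  "pd d F = (case d of
      None \<Rightarrow> (\<lambda>t x. deriv (\<lambda>s. F s x) t)
    | Some i \<Rightarrow> (\<lambda>t x. deriv (\<lambda>s. F t (x + s *\<^sub>R axis i 1)) 0))"

primrec pds :: "'n::finite option list \<Rightarrow> 'n fld \<Rightarrow> 'n fld" where
  "pds [] F = F"
| "pds (d # ds) F = pd d (pds ds F)"

definition smooth_on :: "(real \<times> (real^'n::finite)) set \<Rightarrow> 'n fld \<Rightarrow> bool" where
  "smooth_on U F \<longleftrightarrow> (\<forall>ds.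
      continuous_on U (\<lambda>p. pds ds F (fst p) (snd p)) \<and>
      (\<forall>(t,x)\<in>U. (\<lambda>s. pds ds F s x) differentiable (at t) \<and>
         (\<forall>i. (\<lambda>s. pds ds F t (x + s *\<^sub>R axis i 1)) differentiable (at 0))))"

definition posdef_at :: "('a::finite \<Rightarrow> 'a \<Rightarrow> 'n fld) \<Rightarrow> real \<Rightarrow> real^'n \<Rightarrow> bool" where
  "posdef_at G t x \<longleftrightarrow> (\<forall>v::'a \<Rightarrow> real. v \<noteq> (\<lambda>_. 0) \<longrightarrow>
      (\<Sum>a\<in>UNIV. \<Sum>b\<in>UNIV. G a b t x * v a * v b) > 0)"

definition ginv :: "('a::finite \<Rightarrow> 'a \<Rightarrow> 'n fld) \<Rightarrow> 'a \<Rightarrow> 'a \<Rightarrow> 'n fld" where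
  "ginv G a b = (\<lambda>t x. matrix_inv (\<chi> c d. G c d t x) $ a $ b)"

definition Chr :: "('a::finite \<Rightarrow> 'a \<Rightarrow> 'n fld) \<Rightarrow> ('a \<Rightarrow> 'n fld \<Rightarrow> 'n fld)
    \<Rightarrow> 'a \<Rightarrow> 'a \<Rightarrow> 'a \<Rightarrow> 'n fld" where
  "Chr G D i j k = (\<lambda>t x. (1/2) * (\<Sum>l\<in>UNIV. ginv G k l t x *
      (D i (G j l) t x + D j (G i l) t x - D l (G i j) t x)))"

definition Riem :: "('a::finite \<Rightarrow> 'a \<Rightarrow> 'n fld) \<Rightarrow> ('a \<Rightarrow> 'n fld \<Rightarrow> 'n fld)
    \<Rightarrow> 'a \<Rightarrow> 'a \<Rightarrow> 'a \<Rightarrow> 'a \<Rightarrow> 'n fld" where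
  "Riem G D i j k l = (\<lambda>t x. D i (Chr G D j k l) t x - D j (Chr G D i k l) t x
      + (\<Sum>m\<in>UNIV. Chr G D j k m t x * Chr G D i m l t x)
      - (\<Sum>m\<in>UNIV. Chr G D i k m t x * Chr G D j m l t x))"

abbreviation Dsp :: "'n::finite \<Rightarrow> 'n fld \<Rightarrow> 'n fld" where
  "Dsp i \<equiv> pd (Some i)"

definition Rm :: "('n::finite \<Rightarrow> 'n \<Rightarrow> 'n fld) \<Rightarrow> 'n \<Rightarrow> 'n \<Rightarrow> 'n \<Rightarrow> 'n \<Rightarrow> 'n fld" where
  "Rm g = Riem g Dsp"

definition Ric :: "('n::finite \<Rightarrow> 'n \<Rightarrow> 'n fld) \<Rightarrow> 'n \<Rightarrow> 'n \<Rightarrow> 'n fld" where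
  "Ric g j k = (\<lambda>t x. \<Sum>p\<in>UNIV. Rm g p j k p t x)"

definition Scal :: "('n::finite \<Rightarrow> 'n \<Rightarrow> 'n fld) \<Rightarrow> 'n fld" where
  "Scal g = (\<lambda>t x. \<Sum>j\<in>UNIV. \<Sum>k\<in>UNIV. ginv g j k t x * Ric g j k t x)"

definition RicUp :: "('n::finite \<Rightarrow> 'n \<Rightarrow> 'n fld) \<Rightarrow> 'n \<Rightarrow> 'n \<Rightarrow> 'n fld" where
  "RicUp g i l = (\<lambda>t x. \<Sum>m\<in>UNIV. ginv g l m t x * Ric g i m t x)"

definition nabRicUp :: "('n::finite \<Rightarrow> 'n \<Rightarrow> 'n fld) \<Rightarrow> 'n \<Rightarrow> 'n \<Rightarrow> 'n \<Rightarrow> 'n fld" where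
  "nabRicUp g k j l = (\<lambda>t x. Dsp k (RicUp g j l) t x
      + (\<Sum>m\<in>UNIV. Chr g Dsp k m l t x * RicUp g j m t x)
      - (\<Sum>m\<in>UNIV. Chr g Dsp k j m t x * RicUp g m l t x))"

definition nabRic :: "('n::finite \<Rightarrow> 'n \<Rightarrow> 'n fld) \<Rightarrow> 'n \<Rightarrow> 'n \<Rightarrow> 'n \<Rightarrow> 'n fld" where
  "nabRic g m j k = (\<lambda>t x. Dsp m (Ric g j k) t x
      - (\<Sum>p\<in>UNIV. Chr g Dsp m j p t x * Ric g p k t x)
      - (\<Sum>p\<in>UNIV. Chr g Dsp m k p t x * Ric g j p t x))"

definition nabUpRic :: "('n::finite \<Rightarrow> 'n \<Rightarrow> 'n fld) \<Rightarrow> 'n \<Rightarrow> 'n \<Rightarrow> 'n \<Rightarrow> 'n fld" where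
  "nabUpRic g l j k = (\<lambda>t x. \<Sum>m\<in>UNIV. ginv g l m t x * nabRic g m j k t x)"

definition gradUp :: "('n::finite \<Rightarrow> 'n \<Rightarrow> 'n fld) \<Rightarrow> 'n \<Rightarrow> 'n fld" where
  "gradUp g l = (\<lambda>t x. \<Sum>m\<in>UNIV. ginv g l m t x * Dsp m (Scal g) t x)"

definition hessUp :: "('n::finite \<Rightarrow> 'n \<Rightarrow> 'n fld) \<Rightarrow> 'n \<Rightarrow> 'n \<Rightarrow> 'n fld" where
  "hessUp g i l = (\<lambda>t x. Dsp i (gradUp g l) t x
      + (\<Sum>m\<in>UNIV. Chr g Dsp i m l t x * gradUp g m t x))"

definition gtil :: "('n::finite \<Rightarrow> 'n \<Rightarrow> 'n fld) \<Rightarrow> real \<Rightarrow> real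
    \<Rightarrow> 'n option \<Rightarrow> 'n option \<Rightarrow> 'n fld" where
  "gtil g \<epsilon> \<delta> a b = (case (a, b) of
      (Some i, Some j) \<Rightarrow> g i j
    | (None, None) \<Rightarrow> (\<lambda>t x. Scal g t x + \<epsilon> / (2 * (t + \<delta>)))
    | _ \<Rightarrow> (\<lambda>t x. 0))"

definition Rtil :: "('n::finite \<Rightarrow> 'n \<Rightarrow> 'n fld) \<Rightarrow> real \<Rightarrow> real
    \<Rightarrow> 'n option \<Rightarrow> 'n option \<Rightarrow> 'n option \<Rightarrow> 'n option \<Rightarrow> 'n fld" where
  "Rtil g \<epsilon> \<delta> = Riem (gtil g \<epsilon> \<delta>) pd"

end

theory Submission
  imports Defs
begin

definition lp :: "'n::finite option \<Rightarrow> real \<Rightarrow> real^'n \<Rightarrow> real \<Rightarrow> real \<times> (real^'n)" where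
  "lp d s y r = (case d of None \<Rightarrow> (s + r, y) | Some i \<Rightarrow> (s, y + r *\<^sub>R axis i 1))"

definition lf :: "'n::finite option \<Rightarrow> 'n fld \<Rightarrow> real \<Rightarrow> real^'n \<Rightarrow> real \<Rightarrow> real" where
  "lf d F s y r = F (fst (lp d s y r)) (snd (lp d s y r))"

definition HasPD :: "'n::finite option \<Rightarrow> 'n fld \<Rightarrow> real \<Rightarrow> real^'n \<Rightarrow> real \<Rightarrow> bool" where
  "HasPD d F s y D \<longleftrightarrow> (lf d F s y has_real_derivative D) (at 0)"

definition Dif :: "'n::finite option \<Rightarrow> 'n fld \<Rightarrow> real \<Rightarrow> real^'n \<Rightarrow> bool" where
  "Dif d F s y \<longleftrightarrow> (\<exists>D. HasPD d F s y D)"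

lemma lf_eq: "lf d F s y = (\<lambda>r. F (fst (lp d s y r)) (snd (lp d s y r)))"
  by (simp add: lf_def fun_eq_iff)

lemma lf_None: "lf None F s y = (\<lambda>r. F (s + r) y)"
  by (simp add: lf_def lp_def fun_eq_iff)

lemma lf_Some: "lf (Some i) F s y = (\<lambda>r. F s (y + r *\<^sub>R axis i 1))"
  by (simp add: lf_def lp_def fun_eq_iff)

lemma lp0[simp]: "lp d s y 0 = (s, y)"
  by (simp add: lp_def split: option.split)

lemma lp_cont: "isCont (lp d s y) r"
proof (cases d)
  case None
  then show ?thesis unfolding lp_def by (simp add: continuous_Pair continuous_add)
next
  case (Some i)
  then show ?thesis unfolding lp_def
    by (simp add: continuous_Pair continuous_add continuous_scaleR)
qed

lemma ev_line:
  assumes "open V" "(s, y) \<in> V"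
  shows "eventually (\<lambda>r. lp d s y r \<in> V) (nhds 0)"
proof -
  have "open (lp d s y -` V)"
    by (rule continuous_open_vimage) (use lp_cont assms in auto)
  moreover have "0 \<in> lp d s y -` V" using assms by simp
  ultimately have "eventually (\<lambda>r. r \<in> lp d s y -` V) (nhds 0)"
    by (rule eventually_nhds_in_open)
  then show ?thesis by simp
qed

lemma pd_lf: "pd d F s y = deriv (lf d F s y) 0"
proof (cases d)
  case None
  have "\<And>D. (DERIV (\<lambda>s'. F s' y) s :> D) = (DERIV (\<lambda>r. F (s + r) y) 0 :> D)"
    using DERIV_shift[of "\<lambda>s'. F s' y" _ 0 s] by (simp add: add.commute)
  then show ?thesis using None
    by (simp add: pd_def lf_None deriv_def)
next
  case (Some i)
  then show ?thesis by (simp add: pd_def lf_Some)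
qed

lemma HasPD_pd: "HasPD d F s y D \<Longrightarrow> pd d F s y = D"
  unfolding HasPD_def pd_lf by (rule DERIV_imp_deriv)

lemma Dif_HasPD: "Dif d F s y \<Longrightarrow> HasPD d F s y (pd d F s y)"
  unfolding Dif_def using HasPD_pd by metis

lemma HasPD_Dif: "HasPD d F s y D \<Longrightarrow> Dif d F s y"
  unfolding Dif_def by blast

lemma pd_ev:
  assumes "eventually (\<lambda>r. lf d F s y r = lf d G s y r) (nhds 0)"
  shows "pd d F s y = pd d G s y"
proof -
  have "\<And>D. DERIV (lf d F s y) 0 :> D \<longleftrightarrow> DERIV (lf d G s y) 0 :> D"
    by (rule DERIV_cong_ev) (use assms in auto)
  then show ?thesis unfolding pd_lf deriv_def by simp
qed

lemma HasPD_ev: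
  assumes "eventually (\<lambda>r. lf d F s y r = lf d G s y r) (nhds 0)" "HasPD d G s y D"
  shows "HasPD d F s y D"
proof -
  have "DERIV (lf d F s y) 0 :> D \<longleftrightarrow> DERIV (lf d G s y) 0 :> D"
    by (rule DERIV_cong_ev) (use assms in auto)
  then show ?thesis using assms(2) unfolding HasPD_def by simp
qed

lemma ev_lf_open:
  assumes "open V" "(s, y) \<in> V" "\<And>a b. (a, b) \<in> V \<Longrightarrow> F a b = G a b"
  shows "eventually (\<lambda>r. lf d F s y r = lf d G s y r) (nhds 0)"
  using ev_line[OF assms(1,2), of d]
  by (rule eventually_mono) (metis assms(3) lf_def prod.collapse)

lemma pd_open:
  assumes "open V" "(s, y) \<in> V" "\<And>a b. (a, b) \<in> V \<Longrightarrow> F a b = G a b"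
  shows "pd d F s y = pd d G s y"
  by (rule pd_ev[OF ev_lf_open[OF assms]])

lemma HasPD_open:
  assumes "open V" "(s, y) \<in> V" "\<And>a b. (a, b) \<in> V \<Longrightarrow> F a b = G a b" "HasPD d G s y D"
  shows "HasPD d F s y D"
  by (rule HasPD_ev[OF ev_lf_open[OF assms(1-3)] assms(4)])

lemma lf0[simp]: "lf d F s y 0 = F s y"
  by (simp add: lf_def)

lemma lf_const: "lf d (\<lambda>s y. c) s y = (\<lambda>r. c)"
  by (simp add: lf_def fun_eq_iff)

lemma HasPD_const: "HasPD d (\<lambda>s y. c) s y 0"
  unfolding HasPD_def lf_const by (rule DERIV_const)

lemma HasPD_add: "HasPD d F s y D \<Longrightarrow> HasPD d G s y E \<Longrightarrow> HasPD d (\<lambda>s y. F s y + G s y) s y (D + E)"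
proof -
  have e: "lf d (\<lambda>s y. F s y + G s y) s y = (\<lambda>r. lf d F s y r + lf d G s y r)" by (simp add: lf_def fun_eq_iff)
  show "HasPD d F s y D \<Longrightarrow> HasPD d G s y E \<Longrightarrow> ?thesis" unfolding HasPD_def e by (rule DERIV_add)
qed

lemma HasPD_diff: "HasPD d F s y D \<Longrightarrow> HasPD d G s y E \<Longrightarrow> HasPD d (\<lambda>s y. F s y - G s y) s y (D - E)"
proof -
  have e: "lf d (\<lambda>s y. F s y - G s y) s y = (\<lambda>r. lf d F s y r - lf d G s y r)" by (simp add: lf_def fun_eq_iff)
  show "HasPD d F s y D \<Longrightarrow> HasPD d G s y E \<Longrightarrow> ?thesis" unfolding HasPD_def e by (rule DERIV_diff)
qed

lemma HasPD_minus: "HasPD d F s y D \<Longrightarrow> HasPD d (\<lambda>s y. - F s y) s y (- D)"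
proof -
  have e: "lf d (\<lambda>s y. - F s y) s y = (\<lambda>r. - lf d F s y r)" by (simp add: lf_def fun_eq_iff)
  show "HasPD d F s y D \<Longrightarrow> ?thesis" unfolding HasPD_def e by (rule DERIV_minus)
qed

lemma HasPD_mult: "HasPD d F s y D \<Longrightarrow> HasPD d G s y E \<Longrightarrow>
    HasPD d (\<lambda>s y. F s y * G s y) s y (D * G s y + F s y * E)"
proof -
  have e: "lf d (\<lambda>s y. F s y * G s y) s y = (\<lambda>r. lf d F s y r * lf d G s y r)" by (simp add: lf_def fun_eq_iff)
  assume a: "HasPD d F s y D" "HasPD d G s y E"
  have "DERIV (\<lambda>r. lf d F s y r * lf d G s y r) 0 :> D * lf d G s y 0 + E * lf d F s y 0"
    using a unfolding HasPD_def by (rule DERIV_mult)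
  then show ?thesis unfolding HasPD_def e by (simp add: mult.commute)
qed

lemma HasPD_cmult: "HasPD d F s y D \<Longrightarrow> HasPD d (\<lambda>s y. c * F s y) s y (c * D)"
proof -
  have e: "lf d (\<lambda>s y. c * F s y) s y = (\<lambda>r. c * lf d F s y r)" by (simp add: lf_def fun_eq_iff)
  show "HasPD d F s y D \<Longrightarrow> ?thesis" unfolding HasPD_def e by (rule DERIV_cmult)
qed

lemma HasPD_divide: "HasPD d F s y D \<Longrightarrow> HasPD d G s y E \<Longrightarrow> G s y \<noteq> 0 \<Longrightarrow>
    HasPD d (\<lambda>s y. F s y / G s y) s y ((D * G s y - F s y * E) / (G s y * G s y))"
proof -
  have e: "lf d (\<lambda>s y. F s y / G s y) s y = (\<lambda>r. lf d F s y r / lf d G s y r)" by (simp add: lf_def fun_eq_iff)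
  assume a: "HasPD d F s y D" "HasPD d G s y E" "G s y \<noteq> 0"
  have "DERIV (\<lambda>r. lf d F s y r / lf d G s y r) 0 :> (D * lf d G s y 0 - lf d F s y 0 * E) / (lf d G s y 0 * lf d G s y 0)"
    using a unfolding HasPD_def by (intro DERIV_divide) simp_all
  then show ?thesis unfolding HasPD_def e by simp
qed

lemma HasPD_sum: "(\<And>i. i \<in> S \<Longrightarrow> HasPD d (F i) s y (D i)) \<Longrightarrow>
    HasPD d (\<lambda>s y. \<Sum>i\<in>S. F i s y) s y (\<Sum>i\<in>S. D i)"
proof -
  have e: "lf d (\<lambda>s y. \<Sum>i\<in>S. F i s y) s y = (\<lambda>r. \<Sum>i\<in>S. lf d (F i) s y r)" by (simp add: lf_def fun_eq_iff)
  show "(\<And>i. i \<in> S \<Longrightarrow> HasPD d (F i) s y (D i)) \<Longrightarrow> ?thesis"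
    unfolding HasPD_def e by (rule DERIV_sum)
qed

lemma Dif_prod:
  assumes "finite S" "\<And>i. i \<in> S \<Longrightarrow> Dif d (F i) s y"
  shows "Dif d (\<lambda>s y. \<Prod>i\<in>S. F i s y) s y"
  using assms
proof (induction S rule: finite_induct)
  case empty
  have "HasPD d (\<lambda>s y. 1) s y 0" by (rule HasPD_const)
  then show ?case unfolding Dif_def by simp blast
next
  case (insert a S)
  have "Dif d (F a) s y" "Dif d (\<lambda>s y. \<Prod>i\<in>S. F i s y) s y"
    using insert.prems insert.IH by auto
  then obtain D1 D2 where "HasPD d (F a) s y D1" "HasPD d (\<lambda>s y. \<Prod>i\<in>S. F i s y) s y D2"
    unfolding Dif_def by blast
  from HasPD_mult[OF this] have "Dif d (\<lambda>s y. F a s y * (\<Prod>i\<in>S. F i s y)) s y"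
    by (rule HasPD_Dif)
  then show ?case using insert.hyps by simp
qed

lemma Dif_sum:
  assumes "\<And>i. i \<in> S \<Longrightarrow> Dif d (F i) s y"
  shows "Dif d (\<lambda>s y. \<Sum>i\<in>S. F i s y) s y"
proof -
  have "\<And>i. i \<in> S \<Longrightarrow> HasPD d (F i) s y (pd d (F i) s y)" using assms Dif_HasPD by blast
  then have "HasPD d (\<lambda>s y. \<Sum>i\<in>S. F i s y) s y (\<Sum>i\<in>S. pd d (F i) s y)" by (rule HasPD_sum)
  then show ?thesis by (rule HasPD_Dif)
qed

lemma HasPD_cont: "HasPD d F s y D \<Longrightarrow> isCont (lf d F s y) 0"
  unfolding HasPD_def by (rule DERIV_isCont)

lemma pd_add_const:
  assumes "d = Some i"
  shows "pd d (\<lambda>s y. F s y + c s) s y = pd d F s y"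
proof -
  have "\<And>D. DERIV (\<lambda>r. F s (y + r *\<^sub>R axis i 1) + c s) 0 :> D \<longleftrightarrow> DERIV (\<lambda>r. F s (y + r *\<^sub>R axis i 1)) 0 :> D"
  proof
    fix D assume "DERIV (\<lambda>r. F s (y + r *\<^sub>R axis i 1) + c s) 0 :> D"
    from DERIV_diff[OF this DERIV_const[of "c s"]] show "DERIV (\<lambda>r. F s (y + r *\<^sub>R axis i 1)) 0 :> D" by simp
  next
    fix D assume "DERIV (\<lambda>r. F s (y + r *\<^sub>R axis i 1)) 0 :> D"
    from DERIV_add[OF this DERIV_const[of "c s"]] show "DERIV (\<lambda>r. F s (y + r *\<^sub>R axis i 1) + c s) 0 :> D" by simp
  qed
  then show ?thesis by (simp add: assms pd_def deriv_def)
qed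

lemma pd_zero: "pd d (\<lambda>s y. 0) s y = 0"
  by (rule HasPD_pd[OF HasPD_const])

lemma sum_option: "(\<Sum>a\<in>(UNIV::'n::finite option set). f a) = f None + (\<Sum>i\<in>UNIV. f (Some i))"
proof -
  have e: "(UNIV::'n option set) = insert None (range Some)" by (rule UNIV_option_conv)
  have "(\<Sum>a\<in>(UNIV::'n option set). f a) = sum f (insert None (range Some))"
    using e by (rule arg_cong)
  also have "\<dots> = f None + sum f (Some ` UNIV)"
    by (rule sum.insert) auto
  also have "sum f (Some ` (UNIV::'n set)) = (\<Sum>i\<in>UNIV. f (Some i))"
    by (simp add: sum.reindex)
  finally show ?thesis .
qed

lemma mat1_entry: "(mat 1 :: real^'n^'n) $ i $ j = (if i = j then 1 else 0)"
  by (simp add: mat_def)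

lemma mmult_entry: "((A::real^'n^'m) ** (B::real^'k^'n)) $ i $ j = (\<Sum>k\<in>UNIV. A $ i $ k * B $ k $ j)"
  by (simp add: matrix_matrix_mult_def)

lemma inv_unique:
  fixes A B :: "real^'n^'n"
  assumes "A ** B = mat 1" "B ** A = mat 1"
  shows "matrix_inv A = B"
proof -
  have u: "C = B" if "A ** C = mat 1" for C
  proof -
    have "B ** (A ** C) = B" using that by simp
    then show ?thesis by (simp add: matrix_mul_assoc assms(2))
  qed
  have "A ** matrix_inv A = mat 1 \<and> matrix_inv A ** A = mat 1"
    unfolding matrix_inv_def by (rule someI[of _ B]) (use assms in simp)
  then show ?thesis using u by blast
qed

lemma inv_props:
  fixes A :: "real^'n^'n"
  assumes "det A \<noteq> 0"
  shows "A ** matrix_inv A = mat 1" "matrix_inv A ** A = mat 1"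
proof -
  from assms have "invertible A" by (simp add: invertible_det_nz)
  then obtain B where "A ** B = mat 1" "B ** A = mat 1" unfolding invertible_def by blast
  with inv_unique show "A ** matrix_inv A = mat 1" "matrix_inv A ** A = mat 1" by auto
qed

lemma cramer_inv:
  fixes A :: "real^'n^'n"
  assumes "det A \<noteq> 0"
  shows "matrix_inv A $ a $ b = det (\<chi> i j. if j = a then (if i = b then 1 else 0) else A$i$j) / det A"
proof -
  let ?x = "\<chi> k. matrix_inv A $ k $ b"
  have "A *v ?x = axis b 1"
  proof -
    have "(A ** matrix_inv A) $ i $ b = (if i = b then 1 else 0)" for i
      using inv_props(1)[OF assms] by (simp add: mat1_entry)
    then show ?thesis
      by (simp add: vec_eq_iff matrix_vector_mult_def mmult_entry axis_def)
  qed
  then have "?x = (\<chi> k. det(\<chi> i j. if j=k then (axis b 1 :: real^'n)$i else A$i$j) / det A)"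
    using cramer[OF assms] by blast
  then have "?x $ a = det(\<chi> i j. if j=a then (axis b 1 :: real^'n)$i else A$i$j) / det A"
    by simp
  moreover have "(\<chi> i j. if j=a then (axis b 1 :: real^'n)$i else A$i$j) = (\<chi> i j. if j = a then (if i = b then 1 else 0) else A$i$j)"
    by (simp add: vec_eq_iff axis_def)
  ultimately show ?thesis by simp
qed

lemma posdef_det:
  fixes G :: "'n::finite \<Rightarrow> 'n \<Rightarrow> 'n fld"
  assumes "posdef_at G s y"
  shows "det (\<chi> i j. G i j s y) \<noteq> 0"
proof -
  let ?A = "(\<chi> i j. G i j s y) :: real^'n^'n"
  have ker: "\<forall>v. ?A *v v = 0 \<longrightarrow> v = 0"
  proof (intro allI impI)
    fix v :: "real^'n" assume av: "?A *v v = 0"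
    show "v = 0"
    proof (rule ccontr)
      assume "v \<noteq> 0"
      then have "(\<lambda>a. v $ a) \<noteq> (\<lambda>_. 0)" by (auto simp: vec_eq_iff fun_eq_iff)
      then have pos: "(\<Sum>a\<in>UNIV. \<Sum>b\<in>UNIV. G a b s y * v $ a * v $ b) > 0"
        using assms unfolding posdef_at_def by blast
      have "(\<Sum>a\<in>UNIV. \<Sum>b\<in>UNIV. G a b s y * v $ a * v $ b) = (\<Sum>a\<in>UNIV. v $ a * (?A *v v) $ a)"
        by (simp add: matrix_vector_mult_def sum_distrib_left mult_ac)
      also have "\<dots> = 0" using av by simp
      finally show False using pos by simp
    qed
  qed
  then have "\<exists>B. B ** ?A = mat 1" using matrix_left_invertible_ker by blast
  then have "invertible ?A" using invertible_left_inverse by blast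
  then show ?thesis by (simp add: invertible_det_nz)
qed

lemma inv_sym:
  fixes A :: "real^'n^'n"
  assumes "det A \<noteq> 0" "transpose A = A"
  shows "matrix_inv A $ i $ j = matrix_inv A $ j $ i"
proof -
  let ?B = "matrix_inv A"
  have "A ** transpose ?B = mat 1"
    using inv_props(2)[OF assms(1)] by (metis assms(2) matrix_transpose_mul transpose_mat)
  moreover have "transpose ?B ** A = mat 1"
    using inv_props(1)[OF assms(1)] by (metis assms(2) matrix_transpose_mul transpose_mat)
  ultimately have "matrix_inv A = transpose ?B" by (rule inv_unique)
  then show ?thesis by (metis transpose_def vec_lambda_beta)
qed

lemma smooth_HasPD:
  assumes "smooth_on U F" "(s, y) \<in> U"
  shows "HasPD d (pds ds F) s y (pds (d # ds) F s y)"
proof (cases d)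
  case None
  have "(\<lambda>s'. pds ds F s' y) differentiable (at s)"
    using assms unfolding smooth_on_def by blast
  then have "DERIV (\<lambda>s'. pds ds F s' y) s :> pds (d # ds) F s y"
    using None by (simp add: DERIV_deriv_iff_real_differentiable pd_def)
  then have "DERIV (\<lambda>s'. pds ds F s' y) (0 + s) :> pds (d # ds) F s y" by simp
  then have "DERIV (\<lambda>r. pds ds F (r + s) y) 0 :> pds (d # ds) F s y"
    by (subst (asm) DERIV_shift)
  then show ?thesis using None by (simp add: HasPD_def lf_None add.commute)
next
  case (Some i)
  have "(\<lambda>r. pds ds F s (y + r *\<^sub>R axis i 1)) differentiable (at 0)"
    using assms unfolding smooth_on_def by blast
  then have "DERIV (\<lambda>r. pds ds F s (y + r *\<^sub>R axis i 1)) 0 :> pds (d # ds) F s y"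
    using Some by (simp add: DERIV_deriv_iff_real_differentiable pd_def)
  then show ?thesis using Some by (simp add: HasPD_def lf_Some)
qed

lemma Dif_det:
  assumes "\<And>i j. Dif d (H i j) s y"
  shows "Dif d (\<lambda>s y. det ((\<chi> i j. H i j s y) :: real^'n::finite^'n)) s y"
proof -
  have e: "(\<lambda>s y. det ((\<chi> i j. H i j s y) :: real^'n^'n)) =
     (\<lambda>s y. \<Sum>p\<in>{p. p permutes (UNIV::'n set)}. of_int (sign p) * (\<Prod>i\<in>UNIV. H i (p i) s y))"
    by (simp add: det_def)
  have "Dif d (\<lambda>s y. of_int (sign p) * (\<Prod>i\<in>UNIV. H i (p i) s y)) s y" for p
  proof -
    have "Dif d (\<lambda>s y. \<Prod>i\<in>UNIV. H i (p i) s y) s y"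
      by (rule Dif_prod) (use assms in auto)
    then show ?thesis unfolding Dif_def using HasPD_cmult by blast
  qed
  then show ?thesis unfolding e by (intro Dif_sum)
qed

lemma Dif_divide:
  assumes "Dif d F s y" "Dif d G s y" "G s y \<noteq> 0"
  shows "Dif d (\<lambda>s y. F s y / G s y) s y"
  using assms HasPD_divide unfolding Dif_def by blast

lemma delta_sum: "(\<Sum>b\<in>UNIV. (if (l::'n::finite) = b then 1 else 0) * (f b::real)) = f l"
proof -
  have "(\<Sum>b\<in>UNIV. (if (l::'n) = b then 1 else 0) * (f b::real)) = (\<Sum>b\<in>UNIV. if l = b then f b else 0)"
    by (intro sum.cong) auto
  then show ?thesis by (simp add: sum.delta sum.delta')
qed

lemma inv_deriv_alg:
  fixes A A' B X :: "'n::finite \<Rightarrow> 'n \<Rightarrow> real"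
  assumes h: "\<And>a c. (\<Sum>b\<in>UNIV. A' a b * B b c + A a b * X b c) = 0"
    and inv: "\<And>l b. (\<Sum>a\<in>UNIV. B l a * A a b) = (if l = b then 1 else 0)"
  shows "X l m = - (\<Sum>a\<in>UNIV. \<Sum>b\<in>UNIV. B l a * A' a b * B b m)"
proof -
  have h2: "(\<Sum>b\<in>UNIV. A a b * X b c) = - (\<Sum>b\<in>UNIV. A' a b * B b c)" for a c
    using h[of a c] by (simp add: sum.distrib eq_neg_iff_add_eq_0 add.commute)
  have "X l m = (\<Sum>b\<in>UNIV. (if l = b then 1 else 0) * X b m)"
    by (rule delta_sum[symmetric])
  also have "\<dots> = (\<Sum>b\<in>UNIV. (\<Sum>a\<in>UNIV. B l a * A a b) * X b m)"
    by (simp add: inv)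
  also have "\<dots> = (\<Sum>b\<in>UNIV. \<Sum>a\<in>UNIV. B l a * A a b * X b m)"
    by (simp add: sum_distrib_right)
  also have "\<dots> = (\<Sum>a\<in>UNIV. \<Sum>b\<in>UNIV. B l a * A a b * X b m)"
    by (rule sum.swap)
  also have "\<dots> = (\<Sum>a\<in>UNIV. B l a * (\<Sum>b\<in>UNIV. A a b * X b m))"
    by (simp add: sum_distrib_left mult.assoc)
  also have "\<dots> = (\<Sum>a\<in>UNIV. B l a * - (\<Sum>b\<in>UNIV. A' a b * B b m))"
    by (simp add: h2)
  also have "\<dots> = - (\<Sum>a\<in>UNIV. \<Sum>b\<in>UNIV. B l a * A' a b * B b m)"
    by (simp add: sum_distrib_left sum_negf mult.assoc)
  finally show ?thesis .
qed

lemma pd_mult_Dif: "Dif d F s y \<Longrightarrow> Dif d G s y \<Longrightarrow>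
   pd d (\<lambda>s y. F s y * G s y) s y = pd d F s y * G s y + F s y * pd d G s y"
  by (intro HasPD_pd HasPD_mult Dif_HasPD)

lemma Dif_mult: "Dif d F s y \<Longrightarrow> Dif d G s y \<Longrightarrow> Dif d (\<lambda>s y. F s y * G s y) s y"
  using HasPD_mult unfolding Dif_def by blast

lemma pd_sum_Dif: "(\<And>i. i \<in> S \<Longrightarrow> Dif d (F i) s y) \<Longrightarrow>
   pd d (\<lambda>s y. \<Sum>i\<in>S. F i s y) s y = (\<Sum>i\<in>S. pd d (F i) s y)"
  by (intro HasPD_pd HasPD_sum Dif_HasPD)

lemma Dif_open:
  assumes "open V" "(s, y) \<in> V" "\<And>a b. (a, b) \<in> V \<Longrightarrow> F a b = G a b" "Dif d G s y"
  shows "Dif d F s y"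
  using assms HasPD_open unfolding Dif_def by metis

lemma gtil_SS[simp]: "gtil g e dl (Some i) (Some j) = g i j" by (simp add: gtil_def)
lemma gtil_NS[simp]: "gtil g e dl None (Some j) = (\<lambda>t x. 0)" by (simp add: gtil_def)
lemma gtil_SN[simp]: "gtil g e dl (Some i) None = (\<lambda>t x. 0)" by (simp add: gtil_def)
lemma gtil_NN[simp]: "gtil g e dl None None = (\<lambda>t x. Scal g t x + e / (2 * (t + dl)))" by (simp add: gtil_def)

locale RF =
  fixes g :: "'n::finite \<Rightarrow> 'n \<Rightarrow> 'n fld"
    and U :: "(real \<times> (real^'n)) set"
    and T \<epsilon> \<delta> t :: real and x :: "real^'n"
  assumes U_open: "open U"
    and U_time: "U \<subseteq> {0<..<T} \<times> UNIV"
    and g_smooth: "\<And>i j. smooth_on U (g i j)"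
    and g_sym: "\<And>i j s y. (s, y) \<in> U \<Longrightarrow> g i j s y = g j i s y"
    and g_pos: "\<And>s y. (s, y) \<in> U \<Longrightarrow> posdef_at g s y"
    and ricci_flow: "\<And>i j s y. (s, y) \<in> U \<Longrightarrow>
        ((\<lambda>r. g i j r y) has_real_derivative (-2 * Ric g i j s y)) (at s)"
    and eps: "\<epsilon> > 0" and del: "\<delta> > 0"
    and pt: "(t, x) \<in> U"
    and gtil_pos: "posdef_at (gtil g \<epsilon> \<delta>) t x"
begin

definition Ft :: "'n fld" where "Ft = (\<lambda>s y. Scal g s y + \<epsilon> / (2 * (s + \<delta>)))"

lemma gtil_NN': "gtil g \<epsilon> \<delta> None None = Ft" by (simp add: Ft_def)

lemma det_ne: "(s, y) \<in> U \<Longrightarrow> det ((\<chi> i j. g i j s y) :: real^'n^'n) \<noteq> 0"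
  by (rule posdef_det[OF g_pos])

lemma ginv_cr: "(s, y) \<in> U \<Longrightarrow> ginv g a b s y =
   det ((\<chi> i j. if j = a then (if i = b then 1 else 0) else g i j s y) :: real^'n^'n) / det ((\<chi> i j. g i j s y) :: real^'n^'n)"
proof -
  assume q: "(s, y) \<in> U"
  have "ginv g a b s y = det ((\<chi> i j. if j = a then (if i = b then 1 else 0) else ((\<chi> c d. g c d s y) :: real^'n^'n) $ i $ j) :: real^'n^'n) / det ((\<chi> i j. g i j s y) :: real^'n^'n)"
    unfolding ginv_def by (rule cramer_inv[OF det_ne[OF q]])
  also have "((\<chi> i j. if j = a then (if i = b then 1 else 0) else ((\<chi> c d. g c d s y) :: real^'n^'n) $ i $ j) :: real^'n^'n)
     = (\<chi> i j. if j = a then (if i = b then 1 else 0) else g i j s y)"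
    by (simp add: vec_eq_iff)
  finally show ?thesis .
qed

lemma gHas: "(s, y) \<in> U \<Longrightarrow> HasPD d (g i j) s y (pd d (g i j) s y)"
  using smooth_HasPD[OF g_smooth, of s y d "[]"] by simp

lemma gDif: "(s, y) \<in> U \<Longrightarrow> Dif d (g i j) s y"
  using gHas HasPD_Dif by blast

lemma pdsDif: "(s, y) \<in> U \<Longrightarrow> Dif d (pds ds (g i j)) s y"
  using smooth_HasPD[OF g_smooth] HasPD_Dif by blast

lemma Dif_ginv: "(s, y) \<in> U \<Longrightarrow> Dif d (ginv g a b) s y"
proof -
  assume q: "(s, y) \<in> U"
  have h1: "Dif d (\<lambda>s y. if j = a then (if i = b then 1 else 0) else g i j s y) s y" for i j
  proof (cases "j = a")
    case True
    then show ?thesis using HasPD_const unfolding Dif_def by simp blast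
  next
    case False
    then show ?thesis using gDif[OF q] by simp
  qed
  have "Dif d (\<lambda>s y. det ((\<chi> i j. if j = a then (if i = b then 1 else 0) else g i j s y) :: real^'n^'n)
      / det ((\<chi> i j. g i j s y) :: real^'n^'n)) s y"
    by (intro Dif_divide Dif_det h1 gDif q det_ne)
  then show ?thesis
    by (rule Dif_open[OF U_open q, rotated]) (simp add: ginv_cr)
qed

lemma ginv_mult1: "(s, y) \<in> U \<Longrightarrow> (\<Sum>b\<in>UNIV. ginv g l b s y * g b m s y) = (if l = m then 1 else 0)"
  using inv_props(2)[OF det_ne, of s y]
  by (auto simp: ginv_def vec_eq_iff mmult_entry mat1_entry)

lemma ginv_mult2: "(s, y) \<in> U \<Longrightarrow> (\<Sum>b\<in>UNIV. g l b s y * ginv g b m s y) = (if l = m then 1 else 0)"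
  using inv_props(1)[OF det_ne, of s y]
  by (auto simp: ginv_def vec_eq_iff mmult_entry mat1_entry)

lemma ginv_sym: "(s, y) \<in> U \<Longrightarrow> ginv g a b s y = ginv g b a s y"
proof -
  assume q: "(s, y) \<in> U"
  have "transpose ((\<chi> i j. g i j s y) :: real^'n^'n) = (\<chi> i j. g i j s y)"
    using g_sym[OF q] by (simp add: transpose_def vec_eq_iff)
  then show ?thesis unfolding ginv_def by (rule inv_sym[OF det_ne[OF q]])
qed


lemma pd_ginv:
  assumes q: "(s, y) \<in> U"
  shows "pd d (ginv g l m) s y = - (\<Sum>a\<in>UNIV. \<Sum>b\<in>UNIV. ginv g l a s y * pd d (g a b) s y * ginv g b m s y)"
proof -
  have h: "(\<Sum>b\<in>UNIV. pd d (g a b) s y * ginv g b c s y + g a b s y * pd d (ginv g b c) s y) = 0" for a c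
  proof -
    have A: "HasPD d (\<lambda>s y. \<Sum>b\<in>UNIV. g a b s y * ginv g b c s y) s y
        (\<Sum>b\<in>UNIV. pd d (g a b) s y * ginv g b c s y + g a b s y * pd d (ginv g b c) s y)"
      by (rule HasPD_sum, rule HasPD_mult[OF gHas[OF q] Dif_HasPD[OF Dif_ginv[OF q]]])
    have B: "HasPD d (\<lambda>s y. \<Sum>b\<in>UNIV. g a b s y * ginv g b c s y) s y 0"
      by (rule HasPD_open[OF U_open q _ HasPD_const[of d "if a = c then 1 else 0"]]) (simp add: ginv_mult2)
    from HasPD_pd[OF A] HasPD_pd[OF B] show ?thesis by simp
  qed
  have inv: "(\<Sum>a\<in>UNIV. ginv g l a s y * g a b s y) = (if l = b then 1 else 0)" for l b
    by (rule ginv_mult1[OF q])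
  show ?thesis
    by (rule inv_deriv_alg[where A = "\<lambda>a b. g a b s y" and B = "\<lambda>a b. ginv g a b s y"
          and A' = "\<lambda>a b. pd d (g a b) s y" and X = "\<lambda>b c. pd d (ginv g b c) s y", OF h inv])
qed

lemma Ric_eq: "(s, y) \<in> U \<Longrightarrow> Ric g i j s y = -(1/2) * pd None (g i j) s y"
proof -
  assume q: "(s, y) \<in> U"
  have "pd None (g i j) s y = -2 * Ric g i j s y"
    unfolding pd_def using DERIV_imp_deriv[OF ricci_flow[OF q]] by simp
  then show ?thesis by simp
qed

lemma Ric_sym: "(s, y) \<in> U \<Longrightarrow> Ric g i j s y = Ric g j i s y"
proof -
  assume q: "(s, y) \<in> U"
  have "pd None (g i j) s y = pd None (g j i) s y"
    by (rule pd_open[OF U_open q]) (simp add: g_sym)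
  then show ?thesis by (simp add: Ric_eq[OF q])
qed

lemma HasPD_Ric: "(s, y) \<in> U \<Longrightarrow> HasPD d (Ric g i j) s y (-(1/2) * pds [d, None] (g i j) s y)"
proof -
  assume q: "(s, y) \<in> U"
  have "HasPD d (\<lambda>s y. -(1/2) * pds [None] (g i j) s y) s y (-(1/2) * pds [d, None] (g i j) s y)"
    by (rule HasPD_cmult[OF smooth_HasPD[OF g_smooth q]])
  then show ?thesis
    by (rule HasPD_open[OF U_open q, rotated]) (simp add: Ric_eq)
qed

lemma Dif_Ric: "(s, y) \<in> U \<Longrightarrow> Dif d (Ric g i j) s y"
  using HasPD_Ric HasPD_Dif by blast

lemma pd_Ric: "(s, y) \<in> U \<Longrightarrow> pd d (Ric g i j) s y = -(1/2) * pds [d, None] (g i j) s y"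
  using HasPD_Ric HasPD_pd by blast

lemma Dif_Scal: "(s, y) \<in> U \<Longrightarrow> Dif d (Scal g) s y"
  unfolding Scal_def by (rule Dif_sum, rule Dif_sum, rule Dif_mult[OF Dif_ginv Dif_Ric])

lemma Dif_RicUp: "(s, y) \<in> U \<Longrightarrow> Dif d (RicUp g i l) s y"
  unfolding RicUp_def by (rule Dif_sum, rule Dif_mult[OF Dif_ginv Dif_Ric])

lemma t_pos: "(s, y) \<in> U \<Longrightarrow> s > 0"
  using U_time by auto

lemma Ft_pos: "Ft t x > 0"
proof -
  define v :: "'n option \<Rightarrow> real" where "v = (\<lambda>a. if a = None then 1 else 0)"
  have "v \<noteq> (\<lambda>_. 0)" by (auto simp: v_def fun_eq_iff)
  then have "(\<Sum>a\<in>UNIV. \<Sum>b\<in>UNIV. gtil g \<epsilon> \<delta> a b t x * v a * v b) > 0"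
    using gtil_pos unfolding posdef_at_def by blast
  moreover have "(\<Sum>a\<in>UNIV. \<Sum>b\<in>UNIV. gtil g \<epsilon> \<delta> a b t x * v a * v b) = Ft t x"
    by (simp add: sum_option v_def Ft_def)
  ultimately show ?thesis by simp
qed

lemma HasPD_time: "HasPD d (\<lambda>s y. s) s y (if d = None then 1 else 0)"
proof (cases d)
  case None
  have "DERIV (\<lambda>r. s + r) 0 :> 1" by (auto intro!: derivative_eq_intros)
  then show ?thesis using None by (simp add: HasPD_def lf_None)
next
  case (Some i)
  then show ?thesis by (simp add: HasPD_def lf_Some)
qed

lemma HasPD_c:
  assumes q: "(s, y) \<in> U"
  shows "HasPD d (\<lambda>s y. \<epsilon> / (2 * (s + \<delta>))) s y
     (if d = None then - \<epsilon> / (2 * (s + \<delta>)^2) else 0)"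
proof -
  have ne: "2 * (s + \<delta>) \<noteq> 0" using t_pos[OF q] del by simp
  have h: "HasPD d (\<lambda>s y. 2 * (s + \<delta>)) s y (2 * ((if d = None then 1 else 0) + 0))"
    by (rule HasPD_cmult[OF HasPD_add[OF HasPD_time HasPD_const]])
  have "HasPD d (\<lambda>s y. \<epsilon> / (2 * (s + \<delta>))) s y
     ((0 * (2 * (s + \<delta>)) - \<epsilon> * (2 * ((if d = None then 1 else 0) + 0))) / (2 * (s + \<delta>) * (2 * (s + \<delta>))))"
    by (rule HasPD_divide[OF HasPD_const h ne])
  moreover have "((0 * (2 * (s + \<delta>)) - \<epsilon> * (2 * ((if d = None then 1 else 0) + 0))) / (2 * (s + \<delta>) * (2 * (s + \<delta>))))
     = (if d = None then - \<epsilon> / (2 * (s + \<delta>)^2) else 0)"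
  proof (cases "d = None")
    case True
    have xx: "2 * (s + \<delta>) * (2 * (s + \<delta>)) = 2 * (2 * (s + \<delta>)^2)" by (simp add: power2_eq_square algebra_simps)
    have "(0 * (2 * (s + \<delta>)) - \<epsilon> * (2 * (1 + 0))) / (2 * (s + \<delta>) * (2 * (s + \<delta>)))
        = - (2 * \<epsilon>) / (2 * (2 * (s + \<delta>)^2))" by (simp only: xx) simp
    also have "\<dots> = - \<epsilon> / (2 * (s + \<delta>)^2)" by simp
    finally show ?thesis using True by simp
  qed auto
  ultimately show ?thesis by simp
qed

lemma Dif_Ft: "(s, y) \<in> U \<Longrightarrow> Dif d Ft s y"
  unfolding Ft_def using Dif_Scal HasPD_c HasPD_add unfolding Dif_def by blast

definition good :: "real \<Rightarrow> real^'n \<Rightarrow> bool" where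
  "good s y \<longleftrightarrow> (s, y) \<in> U \<and> Ft s y > 0"

lemma EV: "eventually (\<lambda>r. good (fst (lp d t x r)) (snd (lp d t x r))) (nhds 0)"
proof -
  have c: "isCont (lf d Ft t x) 0"
    using Dif_Ft[OF pt, of d] HasPD_cont unfolding Dif_def by blast
  then have "((lf d Ft t x) \<longlongrightarrow> Ft t x) (at 0)"
    by (simp add: isCont_def)
  then have "eventually (\<lambda>r. lf d Ft t x r > 0) (at 0)"
    using Ft_pos by (rule order_tendstoD)
  then have "eventually (\<lambda>r. r \<noteq> 0 \<longrightarrow> lf d Ft t x r > 0) (nhds 0)"
    by (simp add: eventually_at_filter)
  then have e1: "eventually (\<lambda>r. lf d Ft t x r > 0) (nhds 0)"
    by (rule eventually_mono) (use Ft_pos in auto)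
  have e2: "eventually (\<lambda>r. lp d t x r \<in> U) (nhds 0)"
    by (rule ev_line[OF U_open pt])
  show ?thesis using e1 e2
    by eventually_elim (simp add: good_def lf_def)
qed

lemma pd_good:
  assumes "\<And>s y. good s y \<Longrightarrow> F s y = G s y"
  shows "pd d F t x = pd d G t x"
proof (rule pd_ev)
  show "eventually (\<lambda>r. lf d F t x r = lf d G t x r) (nhds 0)"
    using EV[of d] by (rule eventually_mono) (simp add: lf_def assms)
qed

lemma Dif_good:
  assumes "\<And>s y. good s y \<Longrightarrow> F s y = G s y" "Dif d G t x"
  shows "Dif d F t x"
proof -
  have "eventually (\<lambda>r. lf d F t x r = lf d G t x r) (nhds 0)"
    using EV[of d] by (rule eventually_mono) (simp add: lf_def assms)
  then show ?thesis using assms(2) HasPD_ev unfolding Dif_def by blast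
qed

lemma good_pt: "good t x"
  using pt Ft_pos by (simp add: good_def)

end

context RF
begin

lemma gtil_NN_Ft: "gtil g \<epsilon> \<delta> None None s y = Ft s y"
  by (simp add: Ft_def)

lemma ginv_til_all:
  assumes q: "(s, y) \<in> U" and F: "Ft s y \<noteq> 0"
  shows "ginv (gtil g \<epsilon> \<delta>) a b s y = (case a of
      None \<Rightarrow> (case b of None \<Rightarrow> 1 / Ft s y | Some j \<Rightarrow> 0)
    | Some i \<Rightarrow> (case b of None \<Rightarrow> 0 | Some j \<Rightarrow> ginv g i j s y))"
proof -
  define M :: "real^'n option^'n option" where "M = (\<chi> a b. gtil g \<epsilon> \<delta> a b s y)"
  define N :: "real^'n option^'n option" where "N = (\<chi> a b. (case a of
      None \<Rightarrow> (case b of None \<Rightarrow> 1 / Ft s y | Some j \<Rightarrow> 0)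
    | Some i \<Rightarrow> (case b of None \<Rightarrow> 0 | Some j \<Rightarrow> ginv g i j s y)))"
  have MN: "M ** N = mat 1"
  proof -
    have "(M ** N) $ a $ c = mat 1 $ a $ c" for a c
    proof (cases a)
      case None
      then show ?thesis
        by (cases c) (simp_all add: M_def N_def mmult_entry sum_option mat1_entry gtil_NN_Ft F del: gtil_NN)
    next
      case (Some i)
      then show ?thesis
        by (cases c) (simp_all add: M_def N_def mmult_entry sum_option mat1_entry ginv_mult2[OF q])
    qed
    then show ?thesis by (simp add: vec_eq_iff)
  qed
  have NM: "N ** M = mat 1"
  proof -
    have "(N ** M) $ a $ c = mat 1 $ a $ c" for a c
    proof (cases a)
      case None
      then show ?thesis
        by (cases c) (simp_all add: M_def N_def mmult_entry sum_option mat1_entry gtil_NN_Ft F del: gtil_NN)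
    next
      case (Some i)
      then show ?thesis
        by (cases c) (simp_all add: M_def N_def mmult_entry sum_option mat1_entry ginv_mult1[OF q])
    qed
    then show ?thesis by (simp add: vec_eq_iff)
  qed
  have MN': "matrix_inv M = N" by (rule inv_unique[OF MN NM])
  have "ginv (gtil g \<epsilon> \<delta>) a b s y = matrix_inv M $ a $ b" by (simp add: ginv_def M_def)
  also have "\<dots> = N $ a $ b" using MN' by simp
  finally show ?thesis by (simp add: N_def)
qed


lemma pd_zero'[simp]: "pd d (\<lambda>s y. 0) s y = 0"
  by (rule pd_zero)

lemma pdN_g: "(s, y) \<in> U \<Longrightarrow> pd None (g a b) s y = -2 * Ric g a b s y"
  by (simp add: Ric_eq)

lemma pdS_gNN: "pd (Some a) (gtil g \<epsilon> \<delta> None None) s y = pd (Some a) (Scal g) s y"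
  using pd_add_const[of "Some a" a "Scal g" "\<lambda>s. \<epsilon> / (2 * (s + \<delta>))" s y] by simp

lemma pdN_gNN: "pd None (gtil g \<epsilon> \<delta> None None) s y = pd None Ft s y"
  by (simp add: Ft_def)

lemmas chr_simps = Chr_def sum_option pdN_g pdS_gNN pdN_gNN

lemma Chr_SSS:
  assumes q: "(s, y) \<in> U" and F: "Ft s y \<noteq> 0"
  shows "Chr (gtil g \<epsilon> \<delta>) pd (Some j) (Some k) (Some l) s y = Chr g Dsp j k l s y"
  by (simp add: chr_simps ginv_til_all[OF q F] q del: gtil_NN)

lemma Chr_SSN:
  assumes q: "(s, y) \<in> U" and F: "Ft s y \<noteq> 0"
  shows "Chr (gtil g \<epsilon> \<delta>) pd (Some j) (Some k) None s y = Ric g j k s y / Ft s y"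
  by (simp add: chr_simps ginv_til_all[OF q F] q del: gtil_NN)

lemma Chr_SNS:
  assumes q: "(s, y) \<in> U" and F: "Ft s y \<noteq> 0"
  shows "Chr (gtil g \<epsilon> \<delta>) pd (Some j) None (Some l) s y = - RicUp g j l s y"
  by (simp add: chr_simps ginv_til_all[OF q F] q RicUp_def sum_distrib_left sum_negf del: gtil_NN)
    (simp add: sum_distrib_left mult_ac)

lemma Chr_NSS:
  assumes q: "(s, y) \<in> U" and F: "Ft s y \<noteq> 0"
  shows "Chr (gtil g \<epsilon> \<delta>) pd None (Some k) (Some l) s y = - RicUp g k l s y"
  by (simp add: chr_simps ginv_til_all[OF q F] q RicUp_def sum_distrib_left sum_negf del: gtil_NN)
    (simp add: sum_distrib_left mult_ac)

lemma Chr_SNN: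
  assumes q: "(s, y) \<in> U" and F: "Ft s y \<noteq> 0"
  shows "Chr (gtil g \<epsilon> \<delta>) pd (Some j) None None s y = pd (Some j) (Scal g) s y / (2 * Ft s y)"
  by (simp add: chr_simps ginv_til_all[OF q F] q del: gtil_NN)

lemma Chr_NSN:
  assumes q: "(s, y) \<in> U" and F: "Ft s y \<noteq> 0"
  shows "Chr (gtil g \<epsilon> \<delta>) pd None (Some j) None s y = pd (Some j) (Scal g) s y / (2 * Ft s y)"
  by (simp add: chr_simps ginv_til_all[OF q F] q del: gtil_NN)

lemma Chr_NNS:
  assumes q: "(s, y) \<in> U" and F: "Ft s y \<noteq> 0"
  shows "Chr (gtil g \<epsilon> \<delta>) pd None None (Some l) s y = -(1/2) * gradUp g l s y"
  by (simp add: chr_simps ginv_til_all[OF q F] q gradUp_def sum_distrib_left sum_negf del: gtil_NN)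
    (simp add: sum_distrib_left mult_ac)

lemma Chr_NNN:
  assumes q: "(s, y) \<in> U" and F: "Ft s y \<noteq> 0"
  shows "Chr (gtil g \<epsilon> \<delta>) pd None None None s y = pd None Ft s y / (2 * Ft s y)"
  by (simp add: chr_simps ginv_til_all[OF q F] q del: gtil_NN)

end

lemma Dif_cmult: "Dif d F s y \<Longrightarrow> Dif d (\<lambda>s y. c * F s y) s y"
  using HasPD_cmult unfolding Dif_def by blast

lemma Dif_minus: "Dif d F s y \<Longrightarrow> Dif d (\<lambda>s y. - F s y) s y"
  using HasPD_minus unfolding Dif_def by blast

lemma pd_cmult_Dif: "Dif d F s y \<Longrightarrow> pd d (\<lambda>s y. c * F s y) s y = c * pd d F s y"
  by (rule HasPD_pd[OF HasPD_cmult[OF Dif_HasPD]])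

lemma pd_minus_Dif: "Dif d F s y \<Longrightarrow> pd d (\<lambda>s y. - F s y) s y = - pd d F s y"
  by (rule HasPD_pd[OF HasPD_minus[OF Dif_HasPD]])

lemma alg3:
  fixes A B C D E F P R k :: real
  assumes "F \<noteq> 0" "k \<noteq> 0"
  shows "-A/2 + (B*C/(4*F) + (-((P - E/(2*k^2)) * R/(2*F)) - D/2)) =
     -(((P/2 - E/(4*k^2))*R - B*C/4) * inverse F) - (D + A)/2"
  using assms by (simp add: field_simps power2_eq_square)

context RF
begin

lemma Fne: "Ft t x \<noteq> 0" using Ft_pos by simp

lemma Ft_alt: "Scal g t x + \<epsilon> * inverse (2 * t + 2 * \<delta>) = Ft t x"
  by (simp add: Ft_def divide_inverse algebra_simps)

lemma good_D: "good s y \<Longrightarrow> (s, y) \<in> U" "good s y \<Longrightarrow> Ft s y \<noteq> 0"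
  by (auto simp: good_def)

lemma item1: "Rtil g \<epsilon> \<delta> (Some i) (Some j) (Some k) (Some l) t x =
        Rm g i j k l t x
        - (RicUp g i l t x * Ric g j k t x - RicUp g j l t x * Ric g i k t x)
          * inverse (Scal g t x + \<epsilon> * inverse (2 * t + 2 * \<delta>))"
proof -
  have e1: "pd (Some i) (Chr (gtil g \<epsilon> \<delta>) pd (Some j) (Some k) (Some l)) t x = pd (Some i) (Chr g Dsp j k l) t x"
    by (rule pd_good) (simp add: Chr_SSS good_D)
  have e2: "pd (Some j) (Chr (gtil g \<epsilon> \<delta>) pd (Some i) (Some k) (Some l)) t x = pd (Some j) (Chr g Dsp i k l) t x"
    by (rule pd_good) (simp add: Chr_SSS good_D)
  show ?thesis
    unfolding Rtil_def Rm_def Riem_def Ft_alt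
    by (simp add: e1 e2 sum_option Chr_SSS[OF pt Fne] Chr_SSN[OF pt Fne] Chr_SNS[OF pt Fne]
         divide_inverse algebra_simps)
qed


lemma pdS_Scal_formula:
  assumes q: "(s, y) \<in> U"
  shows "pd (Some m) (Scal g) s y = (\<Sum>j\<in>UNIV. \<Sum>k\<in>UNIV.
      (- (\<Sum>a\<in>UNIV. \<Sum>b\<in>UNIV. ginv g j a s y * pd (Some m) (g a b) s y * ginv g b k s y)) * Ric g j k s y
      + ginv g j k s y * (-(1/2) * pds [Some m, None] (g j k) s y))"
proof -
  have "pd (Some m) (Scal g) s y = (\<Sum>j\<in>UNIV. \<Sum>k\<in>UNIV.
      pd (Some m) (ginv g j k) s y * Ric g j k s y + ginv g j k s y * pd (Some m) (Ric g j k) s y)"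
    unfolding Scal_def
    apply (subst pd_sum_Dif)
     apply (rule Dif_sum, rule Dif_mult[OF Dif_ginv[OF q] Dif_Ric[OF q]])
    apply (rule sum.cong, rule refl)
    apply (subst pd_sum_Dif)
     apply (rule Dif_mult[OF Dif_ginv[OF q] Dif_Ric[OF q]])
    apply (rule sum.cong, rule refl)
    apply (rule pd_mult_Dif[OF Dif_ginv[OF q] Dif_Ric[OF q]])
    done
  then show ?thesis by (simp add: pd_ginv[OF q] pd_Ric[OF q])
qed

lemma Dif_DsScal: "Dif (Some i) (Dsp m (Scal g)) t x"
proof -
  have "Dif (Some i) (\<lambda>s y. (\<Sum>j\<in>UNIV. \<Sum>k\<in>UNIV.
      (- (\<Sum>a\<in>UNIV. \<Sum>b\<in>UNIV. ginv g j a s y * pd (Some m) (g a b) s y * ginv g b k s y)) * Ric g j k s y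
      + ginv g j k s y * (-(1/2) * pds [Some m, None] (g j k) s y))) t x"
  proof -
    have d1: "Dif (Some i) (\<lambda>s y. pd (Some m) (g a b) s y) t x" for a b
      using pdsDif[OF pt, of "Some i" "[Some m]" a b] by simp
    have d2: "Dif (Some i) (\<lambda>s y. pds [Some m, None] (g j k) s y) t x" for j k
      using pdsDif[OF pt, of "Some i" "[Some m, None]" j k] by simp
    show ?thesis
      apply (rule Dif_sum, rule Dif_sum)
      apply (rule HasPD_Dif, rule HasPD_add)
       apply (rule Dif_HasPD, rule Dif_mult)
        apply (rule Dif_minus, rule Dif_sum, rule Dif_sum)
        apply (rule Dif_mult[OF Dif_mult[OF Dif_ginv[OF pt] d1] Dif_ginv[OF pt]])
       apply (rule Dif_Ric[OF pt])
      apply (rule Dif_HasPD, rule Dif_mult[OF Dif_ginv[OF pt]], rule Dif_cmult[OF d2])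
      done
  qed
  then show ?thesis
    by (rule Dif_open[OF U_open pt, rotated]) (simp add: pdS_Scal_formula)
qed

lemma Dif_gradUp: "Dif (Some i) (gradUp g l) t x"
  unfolding gradUp_def
  by (rule Dif_sum, rule Dif_mult[OF Dif_ginv[OF pt] Dif_DsScal])

lemma pdN_Ft: "pd None Ft t x = pd None (Scal g) t x - \<epsilon> / (2 * (t + \<delta>)^2)"
proof -
  have "HasPD None Ft t x (pd None (Scal g) t x + (- \<epsilon> / (2 * (t + \<delta>)^2)))"
    unfolding Ft_def using HasPD_add[OF Dif_HasPD[OF Dif_Scal[OF pt]] HasPD_c[OF pt, of None]] by simp
  from HasPD_pd[OF this] show ?thesis by simp
qed

lemma item3: "Rtil g \<epsilon> \<delta> (Some i) None None (Some l) t x =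
        pd None (RicUp g i l) t x - (1/2) * hessUp g i l t x
        - (\<Sum>m\<in>UNIV. RicUp g i m t x * RicUp g m l t x)
        - ((pd None (Scal g) t x / 2 + (- \<epsilon>) / (4 * (t + \<delta>)^2)) * RicUp g i l t x
           - Dsp i (Scal g) t x * gradUp g l t x / 4)
          * inverse (Scal g t x + \<epsilon> * inverse (2 * t + 2 * \<delta>))"
proof -
  have e1: "pd (Some i) (Chr (gtil g \<epsilon> \<delta>) pd None None (Some l)) t x = -(1/2) * pd (Some i) (gradUp g l) t x"
  proof -
    have "pd (Some i) (Chr (gtil g \<epsilon> \<delta>) pd None None (Some l)) t x = pd (Some i) (\<lambda>s y. -(1/2) * gradUp g l s y) t x"
      by (rule pd_good) (simp add: Chr_NNS good_D)
    also have "\<dots> = -(1/2) * pd (Some i) (gradUp g l) t x"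
      by (rule pd_cmult_Dif[OF Dif_gradUp])
    finally show ?thesis .
  qed
  have e2: "pd None (Chr (gtil g \<epsilon> \<delta>) pd (Some i) None (Some l)) t x = - pd None (RicUp g i l) t x"
  proof -
    have "pd None (Chr (gtil g \<epsilon> \<delta>) pd (Some i) None (Some l)) t x = pd None (\<lambda>s y. - RicUp g i l s y) t x"
      by (rule pd_good) (simp add: Chr_SNS good_D)
    also have "\<dots> = - pd None (RicUp g i l) t x"
      by (rule pd_minus_Dif[OF Dif_RicUp[OF pt]])
    finally show ?thesis .
  qed
  have tp: "t + \<delta> \<noteq> 0" using t_pos[OF pt] del by simp
  have sumeq: "(\<Sum>ia\<in>UNIV. - (gradUp g ia t x * Chr g Dsp i ia l t x / 2)) =
      - (\<Sum>m\<in>UNIV. Chr g Dsp i m l t x * gradUp g m t x) / 2"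
    by (simp add: sum_negf sum_divide_distrib mult.commute)
  show ?thesis
    unfolding Rtil_def Riem_def Ft_alt
    apply (simp add: e1 e2 sum_option Chr_SSS[OF pt Fne] Chr_NNS[OF pt Fne] Chr_SNS[OF pt Fne]
         Chr_NNN[OF pt Fne] Chr_SNN[OF pt Fne] Chr_NSS[OF pt Fne] pdN_Ft hessUp_def)
    apply (subst sumeq)
    apply (rule alg3[OF Fne tp])
    done
qed

end

lemma schwarz:
  fixes F :: "'n::finite fld"
  assumes U: "open U" and p: "(t, x) \<in> U" and sm: "smooth_on U F"
  shows "pds [None, Some j] F t x = pds [Some j, None] F t x"
proof (rule ccontr)
  define e where "e = (axis j 1 :: real^'n)"
  define m1 where "m1 = pds [Some j, None] F t x"
  define m2 where "m2 = pds [None, Some j] F t x"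
  assume "pds [None, Some j] F t x \<noteq> pds [Some j, None] F t x"
  then have ne: "m1 \<noteq> m2" by (simp add: m1_def m2_def)
  define ee where "ee = \<bar>m1 - m2\<bar> / 2"
  have ee: "ee > 0" using ne by (simp add: ee_def)
  define P where "P = (\<lambda>p::real \<times> real. (t + fst p, x + snd p *\<^sub>R e))"
  have cP: "continuous_on UNIV P" unfolding P_def by (intro continuous_intros)
  define W where "W = UNIV \<inter> P -` U"
  have oW: "open W" unfolding W_def by (rule continuous_open_preimage[OF cP open_UNIV U])
  define G1 where "G1 = (\<lambda>p. pds [Some j, None] F (fst (P p)) (snd (P p)))"
  define G2 where "G2 = (\<lambda>p. pds [None, Some j] F (fst (P p)) (snd (P p)))"
  have cq: "continuous_on U (\<lambda>q. pds ds F (fst q) (snd q))" for ds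
    using sm unfolding smooth_on_def by blast
  have cG1: "continuous_on W G1" unfolding G1_def
    by (rule continuous_on_compose2[OF cq continuous_on_subset[OF cP]]) (auto simp: W_def)
  have cG2: "continuous_on W G2" unfolding G2_def
    by (rule continuous_on_compose2[OF cq continuous_on_subset[OF cP]]) (auto simp: W_def)
  define S1 where "S1 = W \<inter> G1 -` ball m1 ee"
  have oS1: "open S1" unfolding S1_def by (rule continuous_open_preimage[OF cG1 oW open_ball])
  define S where "S = S1 \<inter> G2 -` ball m2 ee"
  have oS: "open S" unfolding S_def
    by (rule continuous_open_preimage[OF continuous_on_subset[OF cG2] oS1 open_ball]) (auto simp: S1_def)
  have P0: "P (0, 0) = (t, x)" by (simp add: P_def)
  have "(0::real, 0::real) \<in> S"
    using p ee by (simp add: S_def S1_def W_def G1_def G2_def P0 m1_def m2_def)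
  then obtain \<rho> where \<rho>: "\<rho> > 0" "ball (0, 0) \<rho> \<subseteq> S"
    using oS open_contains_ball by blast
  have inS: "(u, v) \<in> S" if "\<bar>u\<bar> < \<rho>/2" "\<bar>v\<bar> < \<rho>/2" for u v
  proof -
    have "norm (-u, -v) \<le> norm (-u) + norm (-v)" by (rule norm_Pair_le)
    then have "dist (0, 0) (u, v) < \<rho>" using that by (simp add: dist_norm)
    then show ?thesis using \<rho> by auto
  qed
  have inU: "(t + u, x + v *\<^sub>R e) \<in> U" if "\<bar>u\<bar> < \<rho>/2" "\<bar>v\<bar> < \<rho>/2" for u v
    using inS[OF that] by (simp add: S_def S1_def W_def P_def)
  have c1: "\<bar>pds [Some j, None] F (t + u) (x + v *\<^sub>R e) - m1\<bar> < ee" if "\<bar>u\<bar> < \<rho>/2" "\<bar>v\<bar> < \<rho>/2" for u v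
    using inS[OF that] by (simp add: S_def S1_def G1_def P_def dist_real_def abs_minus_commute)
  have c2: "\<bar>pds [None, Some j] F (t + u) (x + v *\<^sub>R e) - m2\<bar> < ee" if "\<bar>u\<bar> < \<rho>/2" "\<bar>v\<bar> < \<rho>/2" for u v
    using inS[OF that] by (simp add: S_def G2_def P_def dist_real_def abs_minus_commute)
  have dU: "DERIV (\<lambda>u'. pds ds F (t + u') (x + v *\<^sub>R e)) u :> pds (None # ds) F (t + u) (x + v *\<^sub>R e)"
    if "\<bar>u\<bar> < \<rho>/2" "\<bar>v\<bar> < \<rho>/2" for u v ds
  proof -
    have "HasPD None (pds ds F) (t + u) (x + v *\<^sub>R e) (pds (None # ds) F (t + u) (x + v *\<^sub>R e))"
      by (rule smooth_HasPD[OF sm inU[OF that]])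
    moreover have "lf None (pds ds F) (t + u) (x + v *\<^sub>R e) = (\<lambda>r. pds ds F (t + (r + u)) (x + v *\<^sub>R e))"
      by (simp add: lf_None fun_eq_iff algebra_simps)
    ultimately have "DERIV (\<lambda>r. pds ds F (t + (r + u)) (x + v *\<^sub>R e)) 0 :> pds (None # ds) F (t + u) (x + v *\<^sub>R e)"
      by (simp add: HasPD_def)
    then have "DERIV (\<lambda>u'. pds ds F (t + u') (x + v *\<^sub>R e)) (0 + u) :> pds (None # ds) F (t + u) (x + v *\<^sub>R e)"
      by (subst DERIV_shift)
    then show ?thesis by simp
  qed
  have dV: "DERIV (\<lambda>v'. pds ds F (t + u) (x + v' *\<^sub>R e)) v :> pds (Some j # ds) F (t + u) (x + v *\<^sub>R e)"
    if "\<bar>u\<bar> < \<rho>/2" "\<bar>v\<bar> < \<rho>/2" for u v ds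
  proof -
    have "HasPD (Some j) (pds ds F) (t + u) (x + v *\<^sub>R e) (pds (Some j # ds) F (t + u) (x + v *\<^sub>R e))"
      by (rule smooth_HasPD[OF sm inU[OF that]])
    moreover have "lf (Some j) (pds ds F) (t + u) (x + v *\<^sub>R e) = (\<lambda>r. pds ds F (t + u) (x + (r + v) *\<^sub>R e))"
      by (simp add: lf_Some fun_eq_iff algebra_simps e_def)
    ultimately have "DERIV (\<lambda>r. pds ds F (t + u) (x + (r + v) *\<^sub>R e)) 0 :> pds (Some j # ds) F (t + u) (x + v *\<^sub>R e)"
      by (simp add: HasPD_def)
    then have "DERIV (\<lambda>v'. pds ds F (t + u) (x + v' *\<^sub>R e)) (0 + v) :> pds (Some j # ds) F (t + u) (x + v *\<^sub>R e)"
      by (subst DERIV_shift)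
    then show ?thesis by simp
  qed
  define h where "h = \<rho> / 4"
  have h: "h > 0" "h < \<rho>/2" using \<rho> by (auto simp: h_def)
  have box: "\<bar>u\<bar> < \<rho>/2" if "0 \<le> u" "u \<le> h" for u using that h by auto
  define \<phi> where "\<phi> = (\<lambda>u v. F (t + u) (x + v *\<^sub>R e))"
  obtain \<xi> where \<xi>: "0 < \<xi>" "\<xi> < h"
    "(\<phi> h h - \<phi> h 0) - (\<phi> 0 h - \<phi> 0 0) = (h - 0) * (pds [None] F (t + \<xi>) (x + h *\<^sub>R e) - pds [None] F (t + \<xi>) (x + 0 *\<^sub>R e))"
  proof -
    have "\<And>u. 0 \<le> u \<Longrightarrow> u \<le> h \<Longrightarrow> DERIV (\<lambda>u. \<phi> u h - \<phi> u 0) u :>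
         (pds [None] F (t + u) (x + h *\<^sub>R e) - pds [None] F (t + u) (x + 0 *\<^sub>R e))"
    proof -
      fix u assume u: "0 \<le> u" "u \<le> h"
      have a: "\<bar>u\<bar> < \<rho>/2" "\<bar>h\<bar> < \<rho>/2" "\<bar>0::real\<bar> < \<rho>/2" using box[OF u] h by auto
      show "DERIV (\<lambda>u. \<phi> u h - \<phi> u 0) u :>
         (pds [None] F (t + u) (x + h *\<^sub>R e) - pds [None] F (t + u) (x + 0 *\<^sub>R e))"
        unfolding \<phi>_def using DERIV_diff[OF dU[OF a(1) a(2), of "[]"] dU[OF a(1) a(3), of "[]"]] by simp
    qed
    from MVT2[OF h(1) this] show ?thesis using that by auto
  qed
  obtain \<eta> where \<eta>: "0 < \<eta>" "\<eta> < h"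
    "pds [None] F (t + \<xi>) (x + h *\<^sub>R e) - pds [None] F (t + \<xi>) (x + 0 *\<^sub>R e) = (h - 0) * pds [Some j, None] F (t + \<xi>) (x + \<eta> *\<^sub>R e)"
  proof -
    have "\<And>v. 0 \<le> v \<Longrightarrow> v \<le> h \<Longrightarrow> DERIV (\<lambda>v. pds [None] F (t + \<xi>) (x + v *\<^sub>R e)) v :> pds [Some j, None] F (t + \<xi>) (x + v *\<^sub>R e)"
    proof -
      fix v assume v: "0 \<le> v" "v \<le> h"
      have a: "\<bar>\<xi>\<bar> < \<rho>/2" "\<bar>v\<bar> < \<rho>/2" using box[OF v] box \<xi> h by auto
      show "DERIV (\<lambda>v. pds [None] F (t + \<xi>) (x + v *\<^sub>R e)) v :> pds [Some j, None] F (t + \<xi>) (x + v *\<^sub>R e)"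
        using dV[OF a, of "[None]"] by simp
    qed
    from MVT2[OF h(1) this] show ?thesis using that by auto
  qed
  obtain \<eta>' where \<eta>': "0 < \<eta>'" "\<eta>' < h"
    "(\<phi> h h - \<phi> 0 h) - (\<phi> h 0 - \<phi> 0 0) = (h - 0) * (pds [Some j] F (t + h) (x + \<eta>' *\<^sub>R e) - pds [Some j] F (t + 0) (x + \<eta>' *\<^sub>R e))"
  proof -
    have "\<And>v. 0 \<le> v \<Longrightarrow> v \<le> h \<Longrightarrow> DERIV (\<lambda>v. \<phi> h v - \<phi> 0 v) v :>
         (pds [Some j] F (t + h) (x + v *\<^sub>R e) - pds [Some j] F (t + 0) (x + v *\<^sub>R e))"
    proof -
      fix v assume v: "0 \<le> v" "v \<le> h"
      have a: "\<bar>v\<bar> < \<rho>/2" "\<bar>h\<bar> < \<rho>/2" "\<bar>0::real\<bar> < \<rho>/2" using box[OF v] h by auto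
      have "DERIV (\<lambda>v. \<phi> h v - \<phi> 0 v) v :>
         (pds [Some j] F (t + h) (x + v *\<^sub>R e) - pds [Some j] F (t + 0) (x + v *\<^sub>R e))"
        unfolding \<phi>_def using DERIV_diff[OF dV[OF a(2) a(1), of "[]"] dV[OF a(3) a(1), of "[]"]] by simp
      then show "DERIV (\<lambda>v. \<phi> h v - \<phi> 0 v) v :>
         (pds [Some j] F (t + h) (x + v *\<^sub>R e) - pds [Some j] F (t + 0) (x + v *\<^sub>R e))" .
    qed
    from MVT2[OF h(1) this] show ?thesis using that by auto
  qed
  obtain \<xi>' where \<xi>': "0 < \<xi>'" "\<xi>' < h"
    "pds [Some j] F (t + h) (x + \<eta>' *\<^sub>R e) - pds [Some j] F (t + 0) (x + \<eta>' *\<^sub>R e) = (h - 0) * pds [None, Some j] F (t + \<xi>') (x + \<eta>' *\<^sub>R e)"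
  proof -
    have "\<And>u. 0 \<le> u \<Longrightarrow> u \<le> h \<Longrightarrow> DERIV (\<lambda>u. pds [Some j] F (t + u) (x + \<eta>' *\<^sub>R e)) u :> pds [None, Some j] F (t + u) (x + \<eta>' *\<^sub>R e)"
    proof -
      fix u assume u: "0 \<le> u" "u \<le> h"
      have a: "\<bar>u\<bar> < \<rho>/2" "\<bar>\<eta>'\<bar> < \<rho>/2" using box[OF u] box \<eta>' h by auto
      show "DERIV (\<lambda>u. pds [Some j] F (t + u) (x + \<eta>' *\<^sub>R e)) u :> pds [None, Some j] F (t + u) (x + \<eta>' *\<^sub>R e)"
        using dU[OF a, of "[Some j]"] by simp
    qed
    from MVT2[OF h(1) this] show ?thesis using that by auto
  qed
  have "(\<phi> h h - \<phi> h 0) - (\<phi> 0 h - \<phi> 0 0) = (\<phi> h h - \<phi> 0 h) - (\<phi> h 0 - \<phi> 0 0)" by simp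
  then have "h * (h * pds [Some j, None] F (t + \<xi>) (x + \<eta> *\<^sub>R e)) = h * (h * pds [None, Some j] F (t + \<xi>') (x + \<eta>' *\<^sub>R e))"
    using \<xi>(3) \<eta>(3) \<eta>'(3) \<xi>'(3) by simp
  then have eq: "pds [Some j, None] F (t + \<xi>) (x + \<eta> *\<^sub>R e) = pds [None, Some j] F (t + \<xi>') (x + \<eta>' *\<^sub>R e)"
    using h by simp
  have "\<bar>pds [Some j, None] F (t + \<xi>) (x + \<eta> *\<^sub>R e) - m1\<bar> < ee"
    by (rule c1) (use \<xi> \<eta> h in auto)
  moreover have "\<bar>pds [None, Some j] F (t + \<xi>') (x + \<eta>' *\<^sub>R e) - m2\<bar> < ee"
    by (rule c2) (use \<xi>' \<eta>' h in auto)
  ultimately have "\<bar>m1 - m2\<bar> < 2 * ee" using eq by linarith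
  then show False by (simp add: ee_def)
qed

lemma core_alg:
  fixes Gi Rc :: "'n::finite \<Rightarrow> 'n \<Rightarrow> real" and dg P :: "'n \<Rightarrow> 'n \<Rightarrow> 'n \<Rightarrow> real"
    and \<Gamma> :: "'n \<Rightarrow> 'n \<Rightarrow> 'n \<Rightarrow> real" and RU dtGi :: "'n \<Rightarrow> 'n \<Rightarrow> real" and dGi :: "'n \<Rightarrow> 'n \<Rightarrow> 'n \<Rightarrow> real"
  assumes Gs: "\<And>a b. Gi a b = Gi b a" and Rs: "\<And>a b. Rc a b = Rc b a" and ds: "\<And>a b c. dg a b c = dg a c b"
    and \<Gamma>_def: "\<And>a b c. \<Gamma> a b c = 1/2 * (\<Sum>m\<in>UNIV. Gi c m * (dg a b m + dg b a m - dg m a b))"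
    and RU_def: "\<And>a b. RU a b = (\<Sum>m\<in>UNIV. Gi b m * Rc a m)"
    and dGi_def: "\<And>j l m. dGi j l m = - (\<Sum>a\<in>UNIV. \<Sum>b\<in>UNIV. Gi l a * dg j a b * Gi b m)"
    and dtGi_def: "\<And>l m. dtGi l m = - (\<Sum>a\<in>UNIV. \<Sum>b\<in>UNIV. Gi l a * (-2 * Rc a b) * Gi b m)"
  shows "1/2 * (\<Sum>m\<in>UNIV. dtGi l m * (dg j k m + dg k j m - dg m j k) + Gi l m * (P j k m + P k j m - P m j k))
        + (\<Sum>m\<in>UNIV. dGi j l m * Rc k m + Gi l m * (-(1/2) * P j k m))
        - (\<Sum>m\<in>UNIV. \<Gamma> j k m * RU m l) + (\<Sum>m\<in>UNIV. RU k m * \<Gamma> j m l)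
      = -((\<Sum>m\<in>UNIV. dGi k l m * Rc j m + Gi l m * (-(1/2) * P k j m)) + (\<Sum>m\<in>UNIV. \<Gamma> k m l * RU j m)
           - (\<Sum>m\<in>UNIV. \<Gamma> k j m * RU m l))
        + (\<Sum>m\<in>UNIV. Gi l m * ((-(1/2) * P m j k) - (\<Sum>p\<in>UNIV. \<Gamma> m j p * Rc p k) - (\<Sum>p\<in>UNIV. \<Gamma> m k p * Rc j p)))"
proof -
  have \<Gamma>s: "\<Gamma> a b c = \<Gamma> b a c" for a b c
    unfolding \<Gamma>_def by (simp add: ds[of _ a b] algebra_simps)
  have B: "dGi j l m = - (\<Sum>p\<in>UNIV. \<Gamma> j p l * Gi p m) - (\<Sum>p\<in>UNIV. \<Gamma> j p m * Gi l p)" for j l m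
  proof -
    define E where "E = (\<lambda>p c. dg j p c + dg p j c - dg c j p)"
    have T1: "(\<Sum>p\<in>UNIV. \<Gamma> j p l * Gi p m) = 1/2 * (\<Sum>p\<in>UNIV. \<Sum>c\<in>UNIV. Gi l c * Gi p m * E p c)"
      unfolding \<Gamma>_def E_def by (simp add: sum_distrib_left sum_distrib_right mult_ac)
    have "(\<Sum>p\<in>UNIV. \<Gamma> j p m * Gi l p) = 1/2 * (\<Sum>p\<in>UNIV. \<Sum>c\<in>UNIV. Gi l p * Gi m c * E p c)"
      unfolding \<Gamma>_def E_def by (simp add: sum_distrib_left sum_distrib_right mult_ac)
    also have "(\<Sum>p\<in>UNIV. \<Sum>c\<in>UNIV. Gi l p * Gi m c * E p c) = (\<Sum>c\<in>UNIV. \<Sum>p\<in>UNIV. Gi l p * Gi m c * E p c)"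
      by (rule sum.swap)
    also have "\<dots> = (\<Sum>p\<in>UNIV. \<Sum>c\<in>UNIV. Gi l c * Gi p m * E c p)"
      by (simp add: Gs[of m])
    finally have T2: "(\<Sum>p\<in>UNIV. \<Gamma> j p m * Gi l p) = 1/2 * (\<Sum>p\<in>UNIV. \<Sum>c\<in>UNIV. Gi l c * Gi p m * E c p)" .
    have Epc: "E p c + E c p = 2 * dg j c p" for p c
      unfolding E_def using ds[of j p c] by simp
    have "(\<Sum>p\<in>UNIV. \<Sum>c\<in>UNIV. Gi l c * Gi p m * E p c) + (\<Sum>p\<in>UNIV. \<Sum>c\<in>UNIV. Gi l c * Gi p m * E c p)
        = (\<Sum>p\<in>UNIV. \<Sum>c\<in>UNIV. Gi l c * Gi p m * (E p c + E c p))"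
      by (simp add: sum.distrib distrib_left)
    also have "\<dots> = (\<Sum>p\<in>UNIV. \<Sum>c\<in>UNIV. 2 * (Gi l c * dg j c p * Gi p m))"
      by (simp add: Epc mult_ac)
    also have "\<dots> = 2 * (\<Sum>p\<in>UNIV. \<Sum>c\<in>UNIV. Gi l c * dg j c p * Gi p m)"
      by (simp add: sum_distrib_left)
    also have "(\<Sum>p\<in>UNIV. \<Sum>c\<in>UNIV. Gi l c * dg j c p * Gi p m) = (\<Sum>c\<in>UNIV. \<Sum>p\<in>UNIV. Gi l c * dg j c p * Gi p m)"
      by (rule sum.swap)
    also have "\<dots> = - dGi j l m"
      by (simp add: dGi_def)
    finally show ?thesis using T1 T2 by linarith
  qed
  have C: "(\<Sum>m\<in>UNIV. dGi a l m * Rc b m) = - (\<Sum>p\<in>UNIV. \<Gamma> a p l * RU b p) - (\<Sum>m\<in>UNIV. Gi l m * (\<Sum>p\<in>UNIV. \<Gamma> m a p * Rc p b))" for a b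
  proof -
    have "(\<Sum>m\<in>UNIV. dGi a l m * Rc b m) = - (\<Sum>m\<in>UNIV. \<Sum>p\<in>UNIV. \<Gamma> a p l * Gi p m * Rc b m) - (\<Sum>m\<in>UNIV. \<Sum>p\<in>UNIV. \<Gamma> a p m * Gi l p * Rc b m)"
      by (simp add: B sum_distrib_right sum_distrib_left sum_negf sum_subtractf algebra_simps)
    also have "(\<Sum>m\<in>UNIV. \<Sum>p\<in>UNIV. \<Gamma> a p l * Gi p m * Rc b m) = (\<Sum>p\<in>UNIV. \<Gamma> a p l * RU b p)"
      by (subst sum.swap) (simp add: RU_def sum_distrib_left mult_ac)
    also have "(\<Sum>m\<in>UNIV. \<Sum>p\<in>UNIV. \<Gamma> a p m * Gi l p * Rc b m) = (\<Sum>p\<in>UNIV. \<Sum>m\<in>UNIV. \<Gamma> a p m * Gi l p * Rc b m)"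
      by (rule sum.swap)
    also have "\<dots> = (\<Sum>m\<in>UNIV. Gi l m * (\<Sum>p\<in>UNIV. \<Gamma> m a p * Rc p b))"
      by (simp add: sum_distrib_left \<Gamma>s[of a] Rs[of b] mult_ac)
    finally show ?thesis .
  qed
  have A: "(\<Sum>m\<in>UNIV. dtGi l m * (dg j k m + dg k j m - dg m j k)) = 4 * (\<Sum>m\<in>UNIV. \<Gamma> j k m * RU m l)"
  proof -
    define S where "S = (\<lambda>m. dg j k m + dg k j m - dg m j k)"
    have "(\<Sum>m\<in>UNIV. dtGi l m * S m) = (\<Sum>m\<in>UNIV. \<Sum>a\<in>UNIV. \<Sum>b\<in>UNIV. 2 * (Gi l a * Rc a b) * (Gi b m * S m))"
      by (simp add: dtGi_def sum_distrib_right sum_distrib_left sum_negf mult_ac)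
    also have "\<dots> = (\<Sum>a\<in>UNIV. \<Sum>m\<in>UNIV. \<Sum>b\<in>UNIV. 2 * (Gi l a * Rc a b) * (Gi b m * S m))"
      by (rule sum.swap)
    also have "\<dots> = (\<Sum>a\<in>UNIV. \<Sum>b\<in>UNIV. \<Sum>m\<in>UNIV. 2 * (Gi l a * Rc a b) * (Gi b m * S m))"
      by (intro sum.cong refl sum.swap)
    also have "\<dots> = (\<Sum>a\<in>UNIV. \<Sum>b\<in>UNIV. 2 * (Gi l a * Rc a b) * (\<Sum>m\<in>UNIV. Gi b m * S m))"
      by (simp add: sum_distrib_left)
    also have "\<dots> = (\<Sum>a\<in>UNIV. \<Sum>b\<in>UNIV. 4 * (Gi l a * Rc b a * \<Gamma> j k b))"
      by (intro sum.cong refl) (simp add: \<Gamma>_def S_def Rs)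
    also have "\<dots> = (\<Sum>b\<in>UNIV. \<Sum>a\<in>UNIV. 4 * (Gi l a * Rc b a * \<Gamma> j k b))"
      by (rule sum.swap)
    also have "\<dots> = 4 * (\<Sum>m\<in>UNIV. \<Gamma> j k m * RU m l)"
      by (simp add: RU_def sum_distrib_left sum_distrib_right mult_ac)
    finally show ?thesis by (simp add: S_def)
  qed
  define SP1 where "SP1 = (\<Sum>m\<in>UNIV. Gi l m * P j k m)"
  define SP2 where "SP2 = (\<Sum>m\<in>UNIV. Gi l m * P k j m)"
  define SP3 where "SP3 = (\<Sum>m\<in>UNIV. Gi l m * P m j k)"
  have E1: "(\<Sum>m\<in>UNIV. dtGi l m * (dg j k m + dg k j m - dg m j k) + Gi l m * (P j k m + P k j m - P m j k))
     = (\<Sum>m\<in>UNIV. dtGi l m * (dg j k m + dg k j m - dg m j k)) + SP1 + SP2 - SP3"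
    by (simp add: SP1_def SP2_def SP3_def sum.distrib sum_subtractf distrib_left right_diff_distrib)
  have E2: "(\<Sum>m\<in>UNIV. dGi a l m * Rc b m + Gi l m * (-(1/2) * P a b m)) = (\<Sum>m\<in>UNIV. dGi a l m * Rc b m) - (\<Sum>m\<in>UNIV. Gi l m * P a b m)/2" for a b
    by (simp add: sum.distrib sum_negf sum_divide_distrib sum_subtractf)
  have E4: "(\<Sum>m\<in>UNIV. Gi l m * ((-(1/2) * P m j k) - (\<Sum>p\<in>UNIV. \<Gamma> m j p * Rc p k) - (\<Sum>p\<in>UNIV. \<Gamma> m k p * Rc j p)))
     = - SP3/2 - (\<Sum>m\<in>UNIV. Gi l m * (\<Sum>p\<in>UNIV. \<Gamma> m j p * Rc p k)) - (\<Sum>m\<in>UNIV. Gi l m * (\<Sum>p\<in>UNIV. \<Gamma> m k p * Rc j p))"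
    by (simp add: SP3_def sum_subtractf sum_negf sum_divide_distrib right_diff_distrib)
  have R2: "(\<Sum>p\<in>UNIV. \<Gamma> j p l * RU k p) = (\<Sum>m\<in>UNIV. RU k m * \<Gamma> j m l)"
    by (simp add: mult.commute)
  have R3: "(\<Sum>m\<in>UNIV. \<Gamma> k j m * RU m l) = (\<Sum>m\<in>UNIV. \<Gamma> j k m * RU m l)"
    by (simp add: \<Gamma>s[of k j])
  have R5: "(\<Sum>m\<in>UNIV. Gi l m * (\<Sum>p\<in>UNIV. \<Gamma> m k p * Rc p j)) = (\<Sum>m\<in>UNIV. Gi l m * (\<Sum>p\<in>UNIV. \<Gamma> m k p * Rc j p))"
    by (simp add: Rs[of _ j])
  show ?thesis
    using E1 E2[of j k] E2[of k j] E4 A C[of j k] C[of k j] R2 R3 R5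
    unfolding SP1_def[symmetric] SP2_def[symmetric]
    by linarith
qed

lemma fterm_alg:
  fixes a b c d F :: real
  assumes "F \<noteq> 0"
  shows "a / F * (-(1/2) * b) - c / (2 * F) * - d = - ((1/2) * (a * b - d * c) * inverse F)"
  using assms by (simp add: field_simps)

context RF
begin

lemma sH: "HasPD None (Dsp a (g b c)) t x (pds [Some a, None] (g b c) t x)"
proof -
  have "HasPD None (pds [Some a] (g b c)) t x (pds [None, Some a] (g b c) t x)"
    by (rule smooth_HasPD[OF g_smooth pt])
  then show ?thesis using schwarz[OF U_open pt g_smooth, of a] by simp
qed

lemma X1: "pd None (Chr g Dsp j k l) t x = 1/2 * (\<Sum>m\<in>UNIV. pd None (ginv g l m) t x *
      (Dsp j (g k m) t x + Dsp k (g j m) t x - Dsp m (g j k) t x)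
    + ginv g l m t x * (pds [Some j, None] (g k m) t x + pds [Some k, None] (g j m) t x - pds [Some m, None] (g j k) t x))"
proof -
  have "HasPD None (Chr g Dsp j k l) t x (1/2 * (\<Sum>m\<in>UNIV. pd None (ginv g l m) t x *
      (Dsp j (g k m) t x + Dsp k (g j m) t x - Dsp m (g j k) t x)
    + ginv g l m t x * (pds [Some j, None] (g k m) t x + pds [Some k, None] (g j m) t x - pds [Some m, None] (g j k) t x)))"
    unfolding Chr_def
    apply (rule HasPD_cmult, rule HasPD_sum)
    apply (rule HasPD_mult[OF Dif_HasPD[OF Dif_ginv[OF pt]]])
    apply (rule HasPD_diff[OF HasPD_add[OF sH sH] sH])
    done
  then show ?thesis by (rule HasPD_pd)
qed

lemma X2: "pd (Some a) (RicUp g b l) t x = (\<Sum>m\<in>UNIV. pd (Some a) (ginv g l m) t x * Ric g b m t x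
    + ginv g l m t x * (-(1/2) * pds [Some a, None] (g b m) t x))"
proof -
  have "HasPD (Some a) (RicUp g b l) t x (\<Sum>m\<in>UNIV. pd (Some a) (ginv g l m) t x * Ric g b m t x
    + ginv g l m t x * (-(1/2) * pds [Some a, None] (g b m) t x))"
    unfolding RicUp_def
    apply (rule HasPD_sum)
    apply (rule HasPD_mult[OF Dif_HasPD[OF Dif_ginv[OF pt]] HasPD_Ric[OF pt]])
    done
  then show ?thesis by (rule HasPD_pd)
qed

lemma NUR: "nabUpRic g l j k t x = (\<Sum>m\<in>UNIV. ginv g l m t x * ((-(1/2) * pds [Some m, None] (g j k) t x)
    - (\<Sum>p\<in>UNIV. Chr g Dsp m j p t x * Ric g p k t x) - (\<Sum>p\<in>UNIV. Chr g Dsp m k p t x * Ric g j p t x)))"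
  by (simp add: nabUpRic_def nabRic_def pd_Ric[OF pt])

lemma core_inst: "1/2 * (\<Sum>m\<in>UNIV. pd None (ginv g l m) t x *
      (Dsp j (g k m) t x + Dsp k (g j m) t x - Dsp m (g j k) t x)
    + ginv g l m t x * (pds [Some j, None] (g k m) t x + pds [Some k, None] (g j m) t x - pds [Some m, None] (g j k) t x))
    + (\<Sum>m\<in>UNIV. pd (Some j) (ginv g l m) t x * Ric g k m t x + ginv g l m t x * (-(1/2) * pds [Some j, None] (g k m) t x))
    - (\<Sum>m\<in>UNIV. Chr g Dsp j k m t x * RicUp g m l t x) + (\<Sum>m\<in>UNIV. RicUp g k m t x * Chr g Dsp j m l t x)
  = -((\<Sum>m\<in>UNIV. pd (Some k) (ginv g l m) t x * Ric g j m t x + ginv g l m t x * (-(1/2) * pds [Some k, None] (g j m) t x))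
       + (\<Sum>m\<in>UNIV. Chr g Dsp k m l t x * RicUp g j m t x) - (\<Sum>m\<in>UNIV. Chr g Dsp k j m t x * RicUp g m l t x))
    + (\<Sum>m\<in>UNIV. ginv g l m t x * ((-(1/2) * pds [Some m, None] (g j k) t x)
    - (\<Sum>p\<in>UNIV. Chr g Dsp m j p t x * Ric g p k t x) - (\<Sum>p\<in>UNIV. Chr g Dsp m k p t x * Ric g j p t x)))"
proof (rule core_alg[where Gi = "\<lambda>a b. ginv g a b t x" and Rc = "\<lambda>a b. Ric g a b t x"
      and dg = "\<lambda>a b c. pd (Some a) (g b c) t x" and P = "\<lambda>a b c. pds [Some a, None] (g b c) t x"
      and \<Gamma> = "\<lambda>a b c. Chr g Dsp a b c t x" and RU = "\<lambda>a b. RicUp g a b t x"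
      and dGi = "\<lambda>j l m. pd (Some j) (ginv g l m) t x" and dtGi = "\<lambda>l m. pd None (ginv g l m) t x"])
  show "\<And>a b. ginv g a b t x = ginv g b a t x" by (rule ginv_sym[OF pt])
  show "\<And>a b. Ric g a b t x = Ric g b a t x" by (rule Ric_sym[OF pt])
  show "\<And>a b c. pd (Some a) (g b c) t x = pd (Some a) (g c b) t x"
    by (rule pd_open[OF U_open pt]) (simp add: g_sym)
  show "\<And>a b c. Chr g Dsp a b c t x = 1/2 * (\<Sum>m\<in>UNIV. ginv g c m t x * (Dsp a (g b m) t x + Dsp b (g a m) t x - Dsp m (g a b) t x))"
    by (simp add: Chr_def)
  show "\<And>a b. RicUp g a b t x = (\<Sum>m\<in>UNIV. ginv g b m t x * Ric g a m t x)"
    by (simp add: RicUp_def)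
  show "\<And>j l m. pd (Some j) (ginv g l m) t x = - (\<Sum>a\<in>UNIV. \<Sum>b\<in>UNIV. ginv g l a t x * Dsp j (g a b) t x * ginv g b m t x)"
    by (rule pd_ginv[OF pt])
  show "\<And>l m. pd None (ginv g l m) t x = - (\<Sum>a\<in>UNIV. \<Sum>b\<in>UNIV. ginv g l a t x * (-2 * Ric g a b t x) * ginv g b m t x)"
    by (simp add: pd_ginv[OF pt] pdN_g[OF pt])
qed

lemma item2: "Rtil g \<epsilon> \<delta> None (Some j) (Some k) (Some l) t x =
        - nabRicUp g k j l t x + nabUpRic g l j k t x
        - (1/2) * (Ric g j k t x * gradUp g l t x - RicUp g j l t x * Dsp k (Scal g) t x)
          * inverse (Scal g t x + \<epsilon> * inverse (2 * t + 2 * \<delta>))"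
proof -
  have e1: "pd None (Chr (gtil g \<epsilon> \<delta>) pd (Some j) (Some k) (Some l)) t x = pd None (Chr g Dsp j k l) t x"
    by (rule pd_good) (simp add: Chr_SSS good_D)
  have e2: "pd (Some j) (Chr (gtil g \<epsilon> \<delta>) pd None (Some k) (Some l)) t x = - pd (Some j) (RicUp g k l) t x"
  proof -
    have "pd (Some j) (Chr (gtil g \<epsilon> \<delta>) pd None (Some k) (Some l)) t x = pd (Some j) (\<lambda>s y. - RicUp g k l s y) t x"
      by (rule pd_good) (simp add: Chr_NSS good_D)
    also have "\<dots> = - pd (Some j) (RicUp g k l) t x"
      by (rule pd_minus_Dif[OF Dif_RicUp[OF pt]])
    finally show ?thesis .
  qed
  have L: "Rtil g \<epsilon> \<delta> None (Some j) (Some k) (Some l) t x =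
      pd None (Chr g Dsp j k l) t x - - pd (Some j) (RicUp g k l) t x
      + (Ric g j k t x / Ft t x * (-(1/2) * gradUp g l t x) + (\<Sum>m\<in>UNIV. Chr g Dsp j k m t x * - RicUp g m l t x))
      - (pd (Some k) (Scal g) t x / (2 * Ft t x) * - RicUp g j l t x + (\<Sum>m\<in>UNIV. - RicUp g k m t x * Chr g Dsp j m l t x))"
    unfolding Rtil_def Riem_def
    by (simp only: e1 e2 sum_option Chr_SSS[OF pt Fne] Chr_NNS[OF pt Fne] Chr_SNS[OF pt Fne]
         Chr_SSN[OF pt Fne] Chr_NSN[OF pt Fne] Chr_NSS[OF pt Fne])
  have NRU: "nabRicUp g k j l t x = pd (Some k) (RicUp g j l) t x + (\<Sum>m\<in>UNIV. Chr g Dsp k m l t x * RicUp g j m t x)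
      - (\<Sum>m\<in>UNIV. Chr g Dsp k j m t x * RicUp g m l t x)"
    by (simp add: nabRicUp_def)
  have Fterm: "Ric g j k t x / Ft t x * (-(1/2) * gradUp g l t x) - pd (Some k) (Scal g) t x / (2 * Ft t x) * - RicUp g j l t x
     = - ((1/2) * (Ric g j k t x * gradUp g l t x - RicUp g j l t x * Dsp k (Scal g) t x) * inverse (Ft t x))"
    by (rule fterm_alg[OF Fne])
  have s1: "(\<Sum>m\<in>UNIV. Chr g Dsp j k m t x * - RicUp g m l t x) = - (\<Sum>m\<in>UNIV. Chr g Dsp j k m t x * RicUp g m l t x)"
    by (simp add: sum_negf)
  have s2: "(\<Sum>m\<in>UNIV. - RicUp g k m t x * Chr g Dsp j m l t x) = - (\<Sum>m\<in>UNIV. RicUp g k m t x * Chr g Dsp j m l t x)"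
    by (simp add: sum_negf)
  show ?thesis
    unfolding L Ft_alt NRU NUR X1 X2 s1 s2
    using core_inst[where j=j and k=k and l=l] Fterm by linarith
qed

end

theorem lemma4p4:
  fixes g :: "'n::finite \<Rightarrow> 'n \<Rightarrow> 'n fld"
    and U :: "(real \<times> (real^'n)) set"
    and T \<epsilon> \<delta> t :: real and x :: "real^'n"
  assumes U_open: "open U"
    and U_time: "U \<subseteq> {0<..<T} \<times> UNIV"
    and g_smooth: "\<And>i j. smooth_on U (g i j)"
    and g_sym: "\<And>i j s y. (s, y) \<in> U \<Longrightarrow> g i j s y = g j i s y"
    and g_pos: "\<And>s y. (s, y) \<in> U \<Longrightarrow> posdef_at g s y"
    and ricci_flow: "\<And>i j s y. (s, y) \<in> U \<Longrightarrow>
        ((\<lambda>r. g i j r y) has_real_derivative (-2 * Ric g i j s y)) (at s)"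
    and eps: "\<epsilon> > 0" and del: "\<delta> > 0"
    and pt: "(t, x) \<in> U"
    and gtil_pos: "posdef_at (gtil g \<epsilon> \<delta>) t x"
  shows
    "(\<forall>i j k l. Rtil g \<epsilon> \<delta> (Some i) (Some j) (Some k) (Some l) t x =
        Rm g i j k l t x
        - (RicUp g i l t x * Ric g j k t x - RicUp g j l t x * Ric g i k t x)
          * inverse (Scal g t x + \<epsilon> * inverse (2 * t + 2 * \<delta>)))
   \<and> (\<forall>j k l. Rtil g \<epsilon> \<delta> None (Some j) (Some k) (Some l) t x =
        - nabRicUp g k j l t x + nabUpRic g l j k t x
        - (1/2) * (Ric g j k t x * gradUp g l t x - RicUp g j l t x * Dsp k (Scal g) t x)
          * inverse (Scal g t x + \<epsilon> * inverse (2 * t + 2 * \<delta>)))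
   \<and> (\<forall>i l. Rtil g \<epsilon> \<delta> (Some i) None None (Some l) t x =
        pd None (RicUp g i l) t x - (1/2) * hessUp g i l t x
        - (\<Sum>m\<in>UNIV. RicUp g i m t x * RicUp g m l t x)
        - ((pd None (Scal g) t x / 2 + (- \<epsilon>) / (4 * (t + \<delta>)^2)) * RicUp g i l t x
           - Dsp i (Scal g) t x * gradUp g l t x / 4)
          * inverse (Scal g t x + \<epsilon> * inverse (2 * t + 2 * \<delta>)))"
proof -
  have R: "RF g U T \<epsilon> \<delta> t x"
    unfolding RF_def using U_open U_time g_smooth g_sym g_pos ricci_flow eps del pt gtil_pos by blast
  show ?thesis using RF.item1[OF R] RF.item2[OF R] RF.item3[OF R] by blast
qed

end
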